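(* For every $t>0$ the operator $P(t)$ is pre-Harris. In particular the semigroup $\{P(t)\}_{t\ge0}$ is partially integral.
   Context: Fix $\alpha>0$ and a Borel function $h\colon(0,1)\to[0,\infty)$ with $\int_0^1 h(r)r\,dr=1$. Let $m(dx)=x\,dx$ on $E=(0,\infty)$, $L^1=L^1(E,m)$, $D(m)$ the set of nonnegative $f\in L^1$ with $\int f\,dm=1$. Let $\varepsilon_n$ be i.i.d. exponential with mean $1$, $\theta_n$ i.i.d. on $(0,1)$ with $P(\theta_n\le r)=\int_0^r h(z)z\,dz$, all independent. The process $\{X(t)\}_{t\ge0}$ started at $X_0=x>0$ is defined by $X(t)=e^{t-t_n}X_n$ for $t_n\le t<t_{n+1}$, where $t_0=0$, $t_n=t_{n-1}+\frac1\alpha\log\big(\varepsilon_n X_{n-1}^{-\alpha}+1\big)$ and $X_n=\theta_n(\varepsilon_n+X_{n-1}^\alpha)^{1/\alpha}$ (a piecewise deterministic Markov process with flow $\pi_t x=e^tx$, jump rate $\varphi(x)=\alpha x^\alpha$ and jumps $x\mapsto\theta x$). $\{P(t)\}_{t\ge0}$ is the stochastic semigroup on $L^1$ such that if $X(0)$ has density $f\in D(m)$ with respect to $m$, then $X(t)$ has density $P(t)f$ with respect to $m$ (it solves $\partial_t u=-\frac1x\partial_x(x^2u)-\varphi u+\int_x^\infty \frac1y h(x/y)\varphi(y)u(t,y)\,dy$). A stochastic operator $Q$ on $L^1$ is pre-Harris if there is a measurable $p\colon E\times E\to[0,\infty)$ with $Qf(x)\ge\int_E p(x,y)f(y)\,m(dy)$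 for $m$-a.e. $x$ and all $f\in D(m)$, and $\int_E p(x,y)\,m(dy)>0$ for $m$-a.e. $x$; it is partially integral if such $p$ exists with $\int_E\int_E p(x,y)\,m(dx)\,m(dy)>0$. The semigroup is partially integral if $P(s)$ is partially integral for some $s>0$. *)

theory Defs
  imports "HOL-Probability.Probability"
begin

text \<open>The measure m(dx) = x dx on E = (0,infinity), realised on the real line
  (it gives zero mass to the complement of (0,infinity)).\<close>
definition mE :: "real measure" where
  "mE = density lborel (\<lambda>x. ennreal (indicator {0<..} x * x))"

definition Dens :: "real measure \<Rightarrow> (real \<Rightarrow> real) set" where
  "Dens M = {f. f \<in> borel_measurable M \<and> (AE x in M. 0 \<le> f x) \<and>
                integrable M f \<and> integral\<^sup>L M f = 1}"

definition pre_Harris :: "real measure \<Rightarrow> ((real \<Rightarrow> real) \<Rightarrow> real \<Rightarrow> real) \<Rightarrow> bool" where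
  "pre_Harris M Q \<longleftrightarrow> (\<exists>p :: real \<Rightarrow> real \<Rightarrow> real.
      (\<lambda>(x, y). p x y) \<in> borel_measurable (M \<Otimes>\<^sub>M M) \<and> (\<forall>x y. 0 \<le> p x y) \<and>
      (\<forall>f \<in> Dens M. AE x in M. (\<integral>\<^sup>+ y. ennreal (p x y * f y) \<partial>M) \<le> ennreal (Q f x)) \<and>
      (AE x in M. 0 < (\<integral>\<^sup>+ y. ennreal (p x y) \<partial>M)))"

definition partially_integral :: "real measure \<Rightarrow> ((real \<Rightarrow> real) \<Rightarrow> real \<Rightarrow> real) \<Rightarrow> bool" where
  "partially_integral M Q \<longleftrightarrow> (\<exists>p :: real \<Rightarrow> real \<Rightarrow> real.
      (\<lambda>(x, y). p x y) \<in> borel_measurable (M \<Otimes>\<^sub>M M) \<and> (\<forall>x y. 0 \<le> p x y) \<and>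
      (\<forall>f \<in> Dens M. AE x in M. (\<integral>\<^sup>+ y. ennreal (p x y * f y) \<partial>M) \<le> ennreal (Q f x)) \<and>
      0 < (\<integral>\<^sup>+ x. \<integral>\<^sup>+ y. ennreal (p x y) \<partial>M \<partial>M))"

text \<open>Jump chain (t_n, X_n) driven by sequences e (e n = epsilon_(n+1)) and
  th (th n = theta_(n+1)), started at X_0 = x.\<close>
fun jstate :: "real \<Rightarrow> real \<Rightarrow> (nat \<Rightarrow> real) \<Rightarrow> (nat \<Rightarrow> real) \<Rightarrow> nat \<Rightarrow> real \<times> real" where
  "jstate \<alpha> x e th 0 = (0, x)"
| "jstate \<alpha> x e th (Suc n) =
     (let (tn, Xn) = jstate \<alpha> x e th n in
       (tn + (1 / \<alpha>) * ln (e n * Xn powr (- \<alpha>) + 1),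
        th n * (e n + Xn powr \<alpha>) powr (1 / \<alpha>)))"

text \<open>X(t) = e^(t - t_N) X_N for t_N <= t < t_(N+1); on the (null) event of
  explosion before t the value is set to 0.\<close>
definition Xpath :: "real \<Rightarrow> real \<Rightarrow> (nat \<Rightarrow> real) \<Rightarrow> (nat \<Rightarrow> real) \<Rightarrow> real \<Rightarrow> real" where
  "Xpath \<alpha> x e th t =
     (if \<exists>n. t < fst (jstate \<alpha> x e th (Suc n)) then
        (let N = (LEAST n. t < fst (jstate \<alpha> x e th (Suc n)))
         in exp (t - fst (jstate \<alpha> x e th N)) * snd (jstate \<alpha> x e th N))
      else 0)"

definition epsM :: "real measure" where
  "epsM = density lborel (\<lambda>z. ennreal (exponential_density 1 z))"

definition thetaM :: "(real \<Rightarrow> real) \<Rightarrow> real measure" where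
  "thetaM h = density lborel (\<lambda>z. ennreal (indicator {0<..<1} z * h z * z))"

definition lawX :: "real \<Rightarrow> (real \<Rightarrow> real) \<Rightarrow> real \<Rightarrow> (real \<Rightarrow> real) \<Rightarrow> real measure" where
  "lawX \<alpha> h t f =
     distr (density mE (\<lambda>x. ennreal (f x)) \<Otimes>\<^sub>M
             ((\<Pi>\<^sub>M n\<in>(UNIV :: nat set). epsM) \<Otimes>\<^sub>M (\<Pi>\<^sub>M n\<in>(UNIV :: nat set). thetaM h)))
           borel (\<lambda>(x, (e, th)). Xpath \<alpha> x e th t)"

definition Pt :: "real \<Rightarrow> (real \<Rightarrow> real) \<Rightarrow> real \<Rightarrow> (real \<Rightarrow> real) \<Rightarrow> real \<Rightarrow> real" where
  "Pt \<alpha> h t f = (\<lambda>x. enn2real (RN_deriv mE (lawX \<alpha> h t f) x))"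

definition semigroup_partially_integral :: "(real \<Rightarrow> (real \<Rightarrow> real) \<Rightarrow> real \<Rightarrow> real) \<Rightarrow> bool" where
  "semigroup_partially_integral P \<longleftrightarrow> (\<exists>s>0. partially_integral mE (P s))"

end

theory Submission
  imports Defs
begin

definition Th :: "(nat \<Rightarrow> real) \<Rightarrow> nat \<Rightarrow> real" where
  "Th th n = (\<Prod>i<n. th i)"
definition Sx :: "real \<Rightarrow> (nat \<Rightarrow> real) \<Rightarrow> (nat \<Rightarrow> real) \<Rightarrow> nat \<Rightarrow> real" where
  "Sx \<alpha> e th n = (\<Sum>i<n. e i / (Th th i) powr \<alpha>)"

lemma Th_pos: "(\<forall>n. th n > 0) \<Longrightarrow> Th th n > 0"
  unfolding Th_def by (simp add: prod_pos)

lemma Sx_nonneg: "(\<forall>n. e n \<ge> 0) \<Longrightarrow> Sx \<alpha> e th n \<ge> 0"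
  unfolding Sx_def by (intro sum_nonneg) auto

lemma jstate_fst_Suc: "fst (jstate \<alpha> x e th (Suc n)) = fst (jstate \<alpha> x e th n) + (1 / \<alpha>) * ln (e n * snd (jstate \<alpha> x e th n) powr (- \<alpha>) + 1)"
  by (simp add: case_prod_beta Let_def)
lemma jstate_snd_Suc: "snd (jstate \<alpha> x e th (Suc n)) = th n * (e n + snd (jstate \<alpha> x e th n) powr \<alpha>) powr (1 / \<alpha>)"
  by (simp add: case_prod_beta Let_def)

lemma jstate_closed:
  assumes a: "\<alpha> > 0" and x: "x > 0" and e: "\<forall>n. e n \<ge> 0" and th: "\<forall>n. th n > 0"
  shows "fst (jstate \<alpha> x e th n) = (1/\<alpha>) * ln ((x powr \<alpha> + Sx \<alpha> e th n) / x powr \<alpha>) \<and>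
         snd (jstate \<alpha> x e th n) = Th th n * (x powr \<alpha> + Sx \<alpha> e th n) powr (1/\<alpha>)"
proof (induction n)
  case 0
  then show ?case using x a by (simp add: Sx_def Th_def powr_powr)
next
  case (Suc n)
  define R where "R = x powr \<alpha> + Sx \<alpha> e th n"
  define T where "T = Th th n"
  have R: "R > 0" unfolding R_def using Sx_nonneg[OF e, of \<alpha> th n] x by (smt (verit) powr_gt_zero)
  have T: "T > 0" unfolding T_def using Th_pos[OF th] .
  have S': "Sx \<alpha> e th (Suc n) = Sx \<alpha> e th n + e n / T powr \<alpha>" by (simp add: Sx_def T_def)
  define R' where "R' = R + e n / T powr \<alpha>"
  have R'R: "x powr \<alpha> + Sx \<alpha> e th (Suc n) = R'" using S' by (simp add: R'_def R_def)
  have R': "R' > 0" unfolding R'_def using R T e by (smt (verit) divide_nonneg_pos powr_gt_zero)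
  have X: "snd (jstate \<alpha> x e th n) = T * R powr (1/\<alpha>)" using Suc by (simp add: R_def T_def)
  have Xa: "(T * R powr (1/\<alpha>)) powr \<alpha> = T powr \<alpha> * R"
    using R T a by (simp add: powr_mult powr_powr)
  have Xma: "(T * R powr (1/\<alpha>)) powr (-\<alpha>) = 1 / (T powr \<alpha> * R)"
    using Xa R T by (simp add: powr_minus_divide)
  have q: "e n * (1 / (T powr \<alpha> * R)) + 1 = R' / R"
    using R T by (simp add: R'_def field_simps)
  have f: "fst (jstate \<alpha> x e th (Suc n)) = (1/\<alpha>) * ln (R / x powr \<alpha>) + (1/\<alpha>) * ln (R' / R)"
  proof -
    have "fst (jstate \<alpha> x e th (Suc n)) = fst (jstate \<alpha> x e th n) + (1 / \<alpha>) * ln (e n * (T * R powr (1/\<alpha>)) powr (- \<alpha>) + 1)"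
      by (simp only: jstate_fst_Suc X)
    also have "\<dots> = fst (jstate \<alpha> x e th n) + (1 / \<alpha>) * ln (R' / R)" by (simp only: Xma q)
    also have "fst (jstate \<alpha> x e th n) = (1/\<alpha>) * ln (R / x powr \<alpha>)" using Suc by (simp add: R_def)
    finally show ?thesis .
  qed
  have "(1/\<alpha>) * ln (R / x powr \<alpha>) + (1/\<alpha>) * ln (R' / R) = (1/\<alpha>) * ln (R' / x powr \<alpha>)"
    using R R' x by (simp add: ln_div add_divide_distrib[symmetric])
  with f R'R have 1: "fst (jstate \<alpha> x e th (Suc n)) = (1/\<alpha>) * ln ((x powr \<alpha> + Sx \<alpha> e th (Suc n)) / x powr \<alpha>)" by simp
  have "e n + T powr \<alpha> * R = T powr \<alpha> * R'" using T by (simp add: R'_def field_simps)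
  then have "(e n + T powr \<alpha> * R) powr (1/\<alpha>) = T * R' powr (1/\<alpha>)"
    using T R' a by (simp add: powr_mult powr_powr)
  then have 2: "snd (jstate \<alpha> x e th (Suc n)) = Th th (Suc n) * (x powr \<alpha> + Sx \<alpha> e th (Suc n)) powr (1/\<alpha>)"
  proof -
    have "snd (jstate \<alpha> x e th (Suc n)) = th n * (e n + (T * R powr (1/\<alpha>)) powr \<alpha>) powr (1 / \<alpha>)"
      by (simp only: jstate_snd_Suc X)
    also have "\<dots> = th n * (T * R' powr (1/\<alpha>))" by (simp only: Xa \<open>(e n + T powr \<alpha> * R) powr (1/\<alpha>) = T * R' powr (1/\<alpha>)\<close>)
    also have "\<dots> = Th th (Suc n) * R' powr (1/\<alpha>)" by (simp add: T_def Th_def)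
    finally show ?thesis using R'R by simp
  qed
  show ?case using 1 2 by blast
qed


lemma exp_formula:
  fixes \<alpha> x R t T :: real
  assumes a: "\<alpha> > 0" and x: "x > 0" and R: "R > 0"
  shows "exp (t - (1/\<alpha>) * ln (R / x powr \<alpha>)) * (T * R powr (1/\<alpha>)) = exp t * x * T"
proof -
  have pos: "R / x powr \<alpha> > 0" using R x by (simp add: zero_less_divide_iff)
  have "exp ((1/\<alpha>) * ln (R / x powr \<alpha>)) = (R / x powr \<alpha>) powr (1/\<alpha>)"
    unfolding powr_def[of "R / x powr \<alpha>"] using pos R x by (simp add: mult.commute)
  also have "\<dots> = R powr (1/\<alpha>) / x" using R x a by (simp add: powr_divide powr_powr)
  finally have E: "exp ((1/\<alpha>) * ln (R / x powr \<alpha>)) = R powr (1/\<alpha>) / x" .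
  have "exp (t - (1/\<alpha>) * ln (R / x powr \<alpha>)) = exp t / (R powr (1/\<alpha>) / x)"
    by (simp only: exp_diff E)
  then show ?thesis using R x by (simp add: field_simps)
qed

lemma Sx_ge:
  assumes e: "\<forall>n. e n \<ge> 0" and th: "\<forall>n. th n > 0" "\<forall>n. th n \<le> 1" and a: "\<alpha> > 0"
  shows "Sx \<alpha> e th n \<ge> (\<Sum>i<n. e i)"
  unfolding Sx_def
proof (rule sum_mono)
  fix i
  have T: "Th th i > 0" using Th_pos th by blast
  have "Th th i \<le> 1" unfolding Th_def using th by (intro prod_le_1) (auto simp: less_imp_le)
  then have "Th th i powr \<alpha> \<le> 1" using T a by (simp add: powr_le1)
  moreover have "Th th i powr \<alpha> > 0" using T by simp
  moreover have "e i * Th th i powr \<alpha> \<le> e i" using mult_left_le[OF \<open>Th th i powr \<alpha> \<le> 1\<close>, of "e i"] e by simp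
  ultimately show "e i \<le> e i / Th th i powr \<alpha>" by (simp add: le_divide_eq)
qed

lemma Xpath_closed:
  assumes a: "\<alpha> > 0" and x: "x > 0" and e: "\<forall>n. e n \<ge> 0" and th: "\<forall>n. th n > 0" "\<forall>n. th n \<le> 1"
    and unb: "\<forall>B. \<exists>n. (\<Sum>i<n. e i) > B"
  shows "\<exists>N. Xpath \<alpha> x e th t = exp t * x * Th th N"
proof -
  let ?T = "\<lambda>n. fst (jstate \<alpha> x e th n)"
  have ex: "\<exists>n. t < ?T (Suc n)"
  proof -
    obtain n where n: "(\<Sum>i<n. e i) > x powr \<alpha> * exp (\<alpha> * t)" using unb by blast
    have "Sx \<alpha> e th n \<ge> (\<Sum>i<n. e i)" using Sx_ge[OF e th a] .
    have "Sx \<alpha> e th (Suc n) \<ge> (\<Sum>i<Suc n. e i)" using Sx_ge[OF e th a] .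
    moreover have "(\<Sum>i<Suc n. e i) \<ge> (\<Sum>i<n. e i)" using e by simp
    ultimately have S: "Sx \<alpha> e th (Suc n) > x powr \<alpha> * exp (\<alpha> * t)" using n by linarith
    have xp: "x powr \<alpha> > 0" using x by simp
    have "x powr \<alpha> + Sx \<alpha> e th (Suc n) > x powr \<alpha> * exp (\<alpha> * t)" using S xp by linarith
    then have "(x powr \<alpha> + Sx \<alpha> e th (Suc n)) / x powr \<alpha> > exp (\<alpha> * t)"
      using xp by (simp add: field_simps)
    then have "ln ((x powr \<alpha> + Sx \<alpha> e th (Suc n)) / x powr \<alpha>) > \<alpha> * t"
      by (metis exp_gt_zero ln_exp ln_less_cancel_iff order.strict_trans)
    then have "t < (1/\<alpha>) * ln ((x powr \<alpha> + Sx \<alpha> e th (Suc n)) / x powr \<alpha>)"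
      using a by (simp add: field_simps)
    then have "t < ?T (Suc n)" using jstate_closed[OF a x e th(1), of "Suc n"] by simp
    then show ?thesis by blast
  qed
  define N where "N = (LEAST n. t < ?T (Suc n))"
  have XP: "Xpath \<alpha> x e th t = exp (t - ?T N) * snd (jstate \<alpha> x e th N)"
    using ex unfolding Xpath_def N_def by (simp add: Let_def)
  have R: "x powr \<alpha> + Sx \<alpha> e th N > 0" using Sx_nonneg[OF e, of \<alpha> th N] x
    by (smt (verit) powr_gt_zero)
  have J: "fst (jstate \<alpha> x e th N) = (1/\<alpha>) * ln ((x powr \<alpha> + Sx \<alpha> e th N) / x powr \<alpha>)"
     "snd (jstate \<alpha> x e th N) = Th th N * (x powr \<alpha> + Sx \<alpha> e th N) powr (1/\<alpha>)"
    using jstate_closed[OF a x e th(1), of N] by auto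
  have "Xpath \<alpha> x e th t = exp t * x * Th th N"
    unfolding XP J by (rule exp_formula[OF a x R])
  then show ?thesis by blast
qed

lemma Xpath_one_jump:
  assumes a: "\<alpha> > 0" and x: "x > 0" and e: "\<forall>n. e n \<ge> 0" and th: "\<forall>n. th n > 0" "\<forall>n. th n \<le> 1"
    and e0: "e 0 \<le> x powr \<alpha> * (exp (\<alpha> * t) - 1)" and e1: "e 1 > x powr \<alpha> * (exp (\<alpha> * t) - 1)"
  shows "Xpath \<alpha> x e th t = exp t * x * th 0"
proof -
  let ?T = "\<lambda>n. fst (jstate \<alpha> x e th n)"
  have xp: "x powr \<alpha> > 0" using x by simp
  have S1: "Sx \<alpha> e th 1 = e 0" by (simp add: Sx_def Th_def)
  have S2: "Sx \<alpha> e th 2 \<ge> e 0 + e 1" using Sx_ge[OF e th a, of 2] by (simp add: numeral_2_eq_2)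
  have "(x powr \<alpha> + e 0) / x powr \<alpha> \<le> exp (\<alpha> * t)" using e0 xp by (simp add: field_simps)
  moreover have "(x powr \<alpha> + e 0) / x powr \<alpha> > 0" using xp e by (simp add: add_pos_nonneg)
  ultimately have "ln ((x powr \<alpha> + e 0) / x powr \<alpha>) \<le> \<alpha> * t"
    by (metis ln_exp ln_le_cancel_iff exp_gt_zero)
  then have T1: "\<not> t < ?T 1" using jstate_closed[OF a x e th(1), of 1] S1 a
    by (simp add: field_simps)
  have "(x powr \<alpha> + Sx \<alpha> e th 2) / x powr \<alpha> > exp (\<alpha> * t)" using e0 e1 S2 xp e
    by (simp add: field_simps) (smt (verit))
  then have "ln ((x powr \<alpha> + Sx \<alpha> e th 2) / x powr \<alpha>) > \<alpha> * t"
    by (metis exp_gt_zero ln_exp ln_less_cancel_iff order.strict_trans)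
  then have T2: "t < ?T (Suc 1)" using jstate_closed[OF a x e th(1), of 2] a
    by (simp add: field_simps numeral_2_eq_2)
  have L: "(LEAST n. t < ?T (Suc n)) = 1"
  proof (rule Least_equality)
    show "t < ?T (Suc 1)" by (rule T2)
    fix y assume "t < ?T (Suc y)"
    with T1 show "1 \<le> y" by (metis One_nat_def Suc_leI neq0_conv)
  qed
  have ex: "\<exists>n. t < ?T (Suc n)" using T2 by blast
  have XP: "Xpath \<alpha> x e th t = exp (t - ?T 1) * snd (jstate \<alpha> x e th 1)"
    unfolding Xpath_def if_P[OF ex] Let_def L by (rule refl)
  have R: "x powr \<alpha> + Sx \<alpha> e th 1 > 0" using Sx_nonneg[OF e, of \<alpha> th 1] x
    by (smt (verit) powr_gt_zero)
  have J: "fst (jstate \<alpha> x e th 1) = (1/\<alpha>) * ln ((x powr \<alpha> + Sx \<alpha> e th 1) / x powr \<alpha>)"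
     "snd (jstate \<alpha> x e th 1) = Th th 1 * (x powr \<alpha> + Sx \<alpha> e th 1) powr (1/\<alpha>)"
    using jstate_closed[OF a x e th(1), of 1] by auto
  have "Xpath \<alpha> x e th t = exp t * x * Th th 1"
    unfolding XP J by (rule exp_formula[OF a x R])
  then show ?thesis by (simp add: Th_def)
qed


abbreviation "M0 \<equiv> (borel :: real measure) \<Otimes>\<^sub>M ((\<Pi>\<^sub>M n\<in>(UNIV :: nat set). (borel :: real measure)) \<Otimes>\<^sub>M (\<Pi>\<^sub>M n\<in>(UNIV :: nat set). (borel :: real measure)))"

lemma meas_coord_e[measurable]: "(\<lambda>\<omega>. fst (snd \<omega>) n) \<in> borel_measurable M0"
  by measurable
lemma meas_coord_th[measurable]: "(\<lambda>\<omega>. snd (snd \<omega>) n) \<in> borel_measurable M0"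
  by measurable

lemma meas_jstate:
  "(\<lambda>\<omega>. fst (jstate \<alpha> (fst \<omega>) (fst (snd \<omega>)) (snd (snd \<omega>)) n)) \<in> borel_measurable M0 \<and>
   (\<lambda>\<omega>. snd (jstate \<alpha> (fst \<omega>) (fst (snd \<omega>)) (snd (snd \<omega>)) n)) \<in> borel_measurable M0"
proof (induction n)
  case 0
  then show ?case by simp
next
  case (Suc n)
  then have [measurable]: "(\<lambda>\<omega>. fst (jstate \<alpha> (fst \<omega>) (fst (snd \<omega>)) (snd (snd \<omega>)) n)) \<in> borel_measurable M0"
    "(\<lambda>\<omega>. snd (jstate \<alpha> (fst \<omega>) (fst (snd \<omega>)) (snd (snd \<omega>)) n)) \<in> borel_measurable M0" by auto
  show ?case unfolding jstate_fst_Suc jstate_snd_Suc by measurable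
qed

lemma meas_Xpath: "(\<lambda>\<omega>. Xpath \<alpha> (fst \<omega>) (fst (snd \<omega>)) (snd (snd \<omega>)) t) \<in> borel_measurable M0"
proof -
  note [measurable] = meas_jstate[THEN conjunct1] meas_jstate[THEN conjunct2]
  have L[measurable]: "(\<lambda>\<omega>. LEAST n. t < fst (jstate \<alpha> (fst \<omega>) (fst (snd \<omega>)) (snd (snd \<omega>)) (Suc n))) \<in> measurable M0 (count_space UNIV)"
    by measurable
  have E: "(\<lambda>\<omega>. exp (t - fst (jstate \<alpha> (fst \<omega>) (fst (snd \<omega>)) (snd (snd \<omega>)) (LEAST n. t < fst (jstate \<alpha> (fst \<omega>) (fst (snd \<omega>)) (snd (snd \<omega>)) (Suc n))))) *
      snd (jstate \<alpha> (fst \<omega>) (fst (snd \<omega>)) (snd (snd \<omega>)) (LEAST n. t < fst (jstate \<alpha> (fst \<omega>) (fst (snd \<omega>)) (snd (snd \<omega>)) (Suc n))))) \<in> borel_measurable M0"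
    by (rule measurable_compose_countable[OF _ L, where f="\<lambda>N \<omega>. exp (t - fst (jstate \<alpha> (fst \<omega>) (fst (snd \<omega>)) (snd (snd \<omega>)) N)) * snd (jstate \<alpha> (fst \<omega>) (fst (snd \<omega>)) (snd (snd \<omega>)) N)"]) measurable
  show ?thesis unfolding Xpath_def Let_def
    by (intro measurable_If E) measurable
qed


abbreviation "Pe \<equiv> (\<Pi>\<^sub>M n\<in>(UNIV :: nat set). epsM)"
abbreviation "Pth h \<equiv> (\<Pi>\<^sub>M n\<in>(UNIV :: nat set). thetaM h)"

lemma sets_eps[measurable_cong]: "sets epsM = sets borel" by (simp add: epsM_def)
lemma sets_theta[measurable_cong]: "sets (thetaM h) = sets borel" by (simp add: thetaM_def)
lemma sets_mE[measurable_cong]: "sets mE = sets borel" by (simp add: mE_def)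
lemma space_eps[simp]: "space epsM = UNIV" by (simp add: epsM_def)
lemma space_theta[simp]: "space (thetaM h) = UNIV" by (simp add: thetaM_def)
lemma space_mE[simp]: "space mE = UNIV" by (simp add: mE_def)

lemma prob_eps: "prob_space epsM"
  unfolding epsM_def using prob_space_exponential_density[of 1] by simp

lemma pps_eps: "product_prob_space (\<lambda>_. epsM)"
  by (simp add: product_prob_space_def product_prob_space_axioms_def product_sigma_finite_def prob_eps prob_space_imp_sigma_finite)

lemma dist_eps: "distributed epsM lborel (\<lambda>x. x) (exponential_density 1)"
  unfolding distributed_def epsM_def
  by (auto simp: distr_id2)

lemma eps_le: "emeasure epsM {x. x \<le> a} = ennreal (1 - exp (- a))" if "0 \<le> a"
proof -
  interpret E: prob_space epsM by (rule prob_eps)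
  show ?thesis using E.exponential_distributedD_le[OF dist_eps, of a] that by (simp add: E.emeasure_eq_measure)
qed

lemma eps_gt: "emeasure epsM {x. a < x} = ennreal (exp (- a))" if "0 \<le> a"
proof -
  interpret E: prob_space epsM by (rule prob_eps)
  show ?thesis using E.exponential_distributedD_gt[OF dist_eps, of a] that by (simp add: E.emeasure_eq_measure)
qed

lemma AE_eps_nonneg: "AE z in epsM. 0 \<le> z"
  unfolding epsM_def by (subst AE_density) (auto simp: exponential_density_def)

lemma AE_e: "AE e in Pe. \<forall>n. 0 \<le> e n"
  by (subst AE_all_countable) (auto intro!: product_prob_space.AE_component[OF pps_eps] AE_eps_nonneg)

lemma AE_io: "AE e in Pe. \<exists>i\<ge>n. 1 \<le> e i"
proof -
  define N where "N = {e \<in> space Pe. \<forall>i\<ge>n. e i < 1}"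
  have Nm: "N \<in> sets Pe" unfolding N_def by measurable
  define q where "q = 1 - exp (- 1::real)"
  have q: "0 \<le> q" "q < 1" unfolding q_def by auto
  have r: "emeasure epsM {..<1} \<le> ennreal q"
  proof -
    have "emeasure epsM {..<1} \<le> emeasure epsM {x. x \<le> 1}"
      by (intro emeasure_mono) auto
    then show ?thesis using eps_le[of 1] by (simp add: q_def)
  qed
  have bound: "emeasure Pe N \<le> ennreal (q ^ k)" for k
  proof -
    let ?J = "{n..<n+k}"
    have "N \<subseteq> prod_emb UNIV (\<lambda>_. epsM) ?J (Pi\<^sub>E ?J (\<lambda>_. {..<1}))"
      unfolding N_def prod_emb_def by (auto simp: PiE_iff)
    then have "emeasure Pe N \<le> emeasure Pe (prod_emb UNIV (\<lambda>_. epsM) ?J (Pi\<^sub>E ?J (\<lambda>_. {..<1})))"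
      by (intro emeasure_mono) (auto intro!: sets_PiM_I)
    also have "\<dots> = (\<Prod>i\<in>?J. emeasure epsM {..<1})"
      by (rule emeasure_PiM_emb) (auto simp: prob_eps)
    also have "\<dots> = emeasure epsM {..<1} ^ k" by simp
    also have "\<dots> \<le> ennreal q ^ k" by (intro power_mono r) auto
    also have "\<dots> = ennreal (q ^ k)" using q by (simp add: ennreal_power)
    finally show ?thesis .
  qed
  have lim: "(\<lambda>k. ennreal (q ^ k)) \<longlonglongrightarrow> ennreal 0"
    by (intro tendsto_ennrealI LIMSEQ_power_zero) (use q in auto)
  have "emeasure Pe N \<le> 0"
  proof -
    have "emeasure Pe N \<le> ennreal 0"
      by (rule tendsto_le[OF trivial_limit_sequentially lim tendsto_const]) (use bound in \<open>simp add: always_eventually\<close>)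
    then show ?thesis by simp
  qed
  then have "N \<in> null_sets Pe" using Nm by auto
  then show ?thesis
    by (rule AE_I') (auto simp: N_def not_le; metis leD)
qed

lemma unb_of_io:
  fixes e :: "nat \<Rightarrow> real"
  assumes e: "\<forall>n. 0 \<le> e n" and io: "\<forall>n. \<exists>i\<ge>n. 1 \<le> (e i :: real)"
  shows "\<forall>B. \<exists>n. B < (\<Sum>i<n. e i)"
proof -
  have "\<exists>n. real k \<le> (\<Sum>i<n. e i)" for k
  proof (induction k)
    case 0
    have "real 0 \<le> (\<Sum>i<0. e i)" by simp
    then show ?case by blast
  next
    case (Suc k)
    then obtain n where n: "real k \<le> (\<Sum>i<n. e i)" by blast
    obtain i where i: "i \<ge> n" "1 \<le> e i" using io by blast
    have "(\<Sum>i<n. e i) \<le> (\<Sum>i<i. e i)" using i e by (intro sum_mono2) auto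
    moreover have "(\<Sum>j<Suc i. e j) = (\<Sum>j<i. e j) + e i" by simp
    ultimately have "real (Suc k) \<le> (\<Sum>j<Suc i. e j)" using n i by simp
    then show ?case by blast
  qed
  then show ?thesis by (metis reals_Archimedean2 order.strict_trans2)
qed

lemma AE_good_e: "AE e in Pe. (\<forall>n. 0 \<le> e n) \<and> (\<forall>B. \<exists>n. B < (\<Sum>i<n. e i))"
proof -
  have "AE e in Pe. \<forall>n. \<exists>i\<ge>n. 1 \<le> e i" by (subst AE_all_countable) (auto intro: AE_io)
  with AE_e show ?thesis by eventually_elim (use unb_of_io in blast)
qed


lemma mE_density: "emeasure mE A = (\<integral>\<^sup>+ y. ennreal (indicator {0<..} y * y) * indicator A y \<partial>lborel)"
  if "A \<in> sets borel" using that unfolding mE_def by (simp add: emeasure_density)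

lemma sf_mE: "sigma_finite_measure mE"
  unfolding mE_def
  by (subst sigma_finite_measure.sigma_finite_iff_density_finite'[OF sigma_finite_lborel]) auto

lemma mE_nonpos: "emeasure mE {..0} = 0"
proof -
  have "emeasure mE {..0} = (\<integral>\<^sup>+ y. ennreal (indicator {0<..} y * y) * indicator {..0} y \<partial>lborel)"
    by (rule mE_density) simp
  also have "\<dots> = 0"
    by (subst nn_integral_0_iff_AE) (auto simp: indicator_def)
  finally show ?thesis .
qed

lemma mE_scale:
  assumes c: "c > 0" and A: "A \<in> sets borel"
  shows "emeasure mE A = ennreal (c * c) * emeasure mE ((\<lambda>x. c * x) -` A)"
proof -
  have A': "(\<lambda>x. c * x) -` A \<in> sets borel" by (rule measurable_sets_borel[OF _ A]) simp
  have "emeasure mE A = (\<integral>\<^sup>+ y. ennreal (indicator {0<..} y * y) * indicator A y \<partial>lborel)"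
    by (rule mE_density[OF A])
  also have "\<dots> = ennreal \<bar>c\<bar> * (\<integral>\<^sup>+ x. ennreal (indicator {0<..} (0 + c * x) * (0 + c * x)) * indicator A (0 + c * x) \<partial>lborel)"
    by (rule nn_integral_real_affine) (use A c in auto)
  also have "(\<integral>\<^sup>+ x. ennreal (indicator {0<..} (0 + c * x) * (0 + c * x)) * indicator A (0 + c * x) \<partial>lborel)
      = (\<integral>\<^sup>+ x. ennreal c * (ennreal (indicator {0<..} x * x) * indicator ((\<lambda>x. c * x) -` A) x) \<partial>lborel)"
    by (intro nn_integral_cong) (use c in \<open>auto simp: indicator_def ennreal_mult zero_less_mult_iff\<close>)
  also have "\<dots> = ennreal c * emeasure mE ((\<lambda>x. c * x) -` A)"
    using A' by (simp add: nn_integral_cmult mE_density)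
  finally show ?thesis using c by (simp add: ennreal_mult mult.assoc)
qed

lemma mE_scale_null:
  assumes c: "c > 0" and A: "A \<in> null_sets mE"
  shows "(\<lambda>x. c * x) -` A \<in> null_sets mE"
proof -
  have Ab: "A \<in> sets borel" using A sets_mE by (simp add: null_sets_def)
  then have A': "(\<lambda>x. c * x) -` A \<in> sets borel" by (intro measurable_sets_borel[OF _ Ab]) simp
  have A0: "emeasure mE A = 0" using A by auto
  have "0 = ennreal (c * c) * emeasure mE ((\<lambda>x. c * x) -` A)"
    using mE_scale[OF c Ab] A0 by simp
  then have "emeasure mE ((\<lambda>x. c * x) -` A) = 0" using c by (auto simp: ennreal_eq_0_iff mult_le_0_iff)
  then show ?thesis using A' sets_mE by (simp add: null_sets_def)
qed

context
  fixes h :: "real \<Rightarrow> real"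
  assumes hm: "(\<lambda>r. indicator {0<..<1} r * h r) \<in> borel_measurable borel"
    and hpos: "\<forall>r\<in>{0<..<1}. 0 \<le> h r"
    and hint: "(\<integral>\<^sup>+ r. ennreal (indicator {0<..<1} r * h r * r) \<partial>lborel) = 1"
begin

lemma hm'[measurable]: "(\<lambda>r. indicator {0<..<1} r * h r * r) \<in> borel_measurable borel"
  by (rule borel_measurable_times[OF hm]) simp

lemma hm'': "(\<lambda>r. ennreal (indicator {0<..<1} r * h r * r)) \<in> borel_measurable lborel"
  using hm' by (simp add: measurable_lborel1)

lemma prob_theta: "prob_space (thetaM h)"
proof (rule prob_spaceI)
  have "emeasure (thetaM h) UNIV = (\<integral>\<^sup>+ r. ennreal (indicator {0<..<1} r * h r * r) * indicator UNIV r \<partial>lborel)"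
    unfolding thetaM_def by (rule emeasure_density[OF hm'']) simp
  then show "emeasure (thetaM h) (space (thetaM h)) = 1" using hint by simp
qed

lemma pps_theta: "product_prob_space (\<lambda>_. thetaM h)"
  by (simp add: product_prob_space_def product_prob_space_axioms_def product_sigma_finite_def prob_theta prob_space_imp_sigma_finite)

lemma AE_theta: "AE z in thetaM h. 0 < z \<and> z \<le> 1"
  unfolding thetaM_def AE_density[OF hm''] by (rule AE_I2) (auto simp: indicator_def)

lemma AE_th: "AE th in Pth h. \<forall>n. 0 < th n \<and> th n \<le> 1"
  by (subst AE_all_countable, intro allI product_prob_space.AE_component[OF pps_theta] UNIV_I AE_theta)

lemma prob_Omega: "prob_space (Pe \<Otimes>\<^sub>M Pth h)"
  by (intro prob_space_pair prob_space_PiM prob_eps prob_theta)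

end


lemma AE_snd_pair:
  assumes M1: "sigma_finite_measure M1" and M2: "sigma_finite_measure M2" and P: "AE y in M2. P y"
  shows "AE z in M1 \<Otimes>\<^sub>M M2. P (snd z)"
proof -
  interpret M2: sigma_finite_measure M2 by (rule M2)
  from P obtain N where N: "{y \<in> space M2. \<not> P y} \<subseteq> N" "N \<in> null_sets M2" unfolding eventually_ae_filter by blast
  have "space M1 \<times> N \<in> null_sets (M1 \<Otimes>\<^sub>M M2)"
    using N by (simp add: M2.emeasure_pair_measure_Times null_sets_def)
  moreover have "{z \<in> space (M1 \<Otimes>\<^sub>M M2). \<not> P (snd z)} \<subseteq> space M1 \<times> N"
    using N by (auto simp: space_pair_measure)
  ultimately show ?thesis by (rule AE_I')
qed

lemma AE_fst_pair:
  assumes M1: "sigma_finite_measure M1" and M2: "sigma_finite_measure M2" and P: "AE y in M1. P y"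
  shows "AE z in M1 \<Otimes>\<^sub>M M2. P (fst z)"
proof -
  interpret M2: sigma_finite_measure M2 by (rule M2)
  from P obtain N where N: "{y \<in> space M1. \<not> P y} \<subseteq> N" "N \<in> null_sets M1" unfolding eventually_ae_filter by blast
  have "N \<times> space M2 \<in> null_sets (M1 \<Otimes>\<^sub>M M2)"
    using N by (simp add: M2.emeasure_pair_measure_Times null_sets_def)
  moreover have "{z \<in> space (M1 \<Otimes>\<^sub>M M2). \<not> P (fst z)} \<subseteq> N \<times> space M2"
    using N by (auto simp: space_pair_measure)
  ultimately show ?thesis by (rule AE_I')
qed

lemma AE_le_of_set_integrals:
  fixes k g :: "'a \<Rightarrow> ennreal"
  assumes k[measurable]: "k \<in> borel_measurable M" and g[measurable]: "g \<in> borel_measurable M"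
    and fin: "integral\<^sup>N M g \<noteq> \<infinity>"
    and le: "\<And>B. B \<in> sets M \<Longrightarrow> (\<integral>\<^sup>+ x. k x * indicator B x \<partial>M) \<le> (\<integral>\<^sup>+ x. g x * indicator B x \<partial>M)"
  shows "AE x in M. k x \<le> g x"
proof -
  let ?N = "{x\<in>space M. g x < k x}"
  have N: "?N \<in> sets M" by measurable
  have "(\<integral>\<^sup>+ x. g x * indicator ?N x \<partial>M) \<le> integral\<^sup>N M g"
    by (intro nn_integral_mono) (auto split: split_indicator)
  then have gfin: "(\<integral>\<^sup>+ x. g x * indicator ?N x \<partial>M) \<noteq> \<infinity>" using fin by (auto simp: top_unique)
  have kfin: "(\<integral>\<^sup>+ x. k x * indicator ?N x \<partial>M) \<noteq> \<infinity>" using le[OF N] gfin by (auto simp: top_unique)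
  have "(\<integral>\<^sup>+ x. (k x - g x) * indicator ?N x \<partial>M) = (\<integral>\<^sup>+x. k x * indicator ?N x - g x * indicator ?N x \<partial>M)"
    by (auto intro!: nn_integral_cong simp: indicator_def)
  also have "\<dots> = (\<integral>\<^sup>+ x. k x * indicator ?N x \<partial>M) - (\<integral>\<^sup>+ x. g x * indicator ?N x \<partial>M)"
    by (rule nn_integral_diff) (use gfin in \<open>auto split: split_indicator\<close>)
  also have "\<dots> = 0" using le[OF N] kfin by (intro diff_eq_0_ennreal) (auto simp: less_top)
  finally have "AE x in M. (k x - g x) * indicator ?N x = 0"
    by (subst (asm) nn_integral_0_iff_AE) auto
  with AE_space show ?thesis
  proof (eventually_elim)
    case (elim x)
    show ?case
    proof (rule ccontr)
      assume "\<not> k x \<le> g x"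
      then have gk: "g x < k x" by (simp add: not_le)
      then have "0 < k x - g x" by (rule diff_gr0_ennreal)
      moreover have "indicator ?N x = (1::ennreal)" using gk elim by (simp add: indicator_def)
      ultimately show False using elim by simp
    qed
  qed
qed

context
  fixes \<alpha> :: real and h :: "real \<Rightarrow> real" and t :: real and f :: "real \<Rightarrow> real"
  assumes a: "0 < \<alpha>"
    and hm: "(\<lambda>r. indicator {0<..<1} r * h r) \<in> borel_measurable borel"
    and hpos: "\<forall>r\<in>{0<..<1}. 0 \<le> h r"
    and hint: "(\<integral>\<^sup>+ r. ennreal (indicator {0<..<1} r * h r * r) \<partial>lborel) = 1"
    and tpos: "0 < t"
    and fD: "f \<in> Dens mE"
begin

lemma fm[measurable]: "f \<in> borel_measurable borel"
  using fD unfolding Dens_def by (simp add: measurable_cong_sets[OF sets_mE refl])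

lemma f_AE: "AE x in mE. 0 \<le> f x" using fD unfolding Dens_def by simp

lemma prob_mu: "prob_space (density mE (\<lambda>x. ennreal (f x)))"
proof (rule prob_spaceI)
  have "emeasure (density mE (\<lambda>x. ennreal (f x))) (space (density mE (\<lambda>x. ennreal (f x)))) = (\<integral>\<^sup>+ x. ennreal (f x) \<partial>mE)"
    by (simp add: emeasure_density measurable_cong_sets[OF sets_mE refl])
  also have "\<dots> = ennreal (integral\<^sup>L mE f)"
    using fD unfolding Dens_def by (intro nn_integral_eq_integral) auto
  also have "\<dots> = 1" using fD unfolding Dens_def by simp
  finally show "emeasure (density mE (\<lambda>x. ennreal (f x))) (space (density mE (\<lambda>x. ennreal (f x)))) = 1" .
qed

abbreviation "\<mu> \<equiv> density mE (\<lambda>x. ennreal (f x))"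
abbreviation "\<Omega> \<equiv> Pe \<Otimes>\<^sub>M Pth h"

lemma sf_Omega: "sigma_finite_measure \<Omega>"
  using prob_Omega[OF hm hpos hint] by (rule prob_space_imp_sigma_finite)
lemma sf_mu: "sigma_finite_measure \<mu>"
  using prob_mu by (rule prob_space_imp_sigma_finite)
lemma psf: "pair_sigma_finite \<mu> \<Omega>"
  by (simp add: pair_sigma_finite_def sf_Omega sf_mu)

lemma sets_big: "sets (\<mu> \<Otimes>\<^sub>M \<Omega>) = sets M0"
  by (intro sets_pair_measure_cong sets_PiM_cong) (simp_all add: sets_mE sets_eps sets_theta)

lemma meas_F[measurable]: "(\<lambda>(x, (e, th)). Xpath \<alpha> x e th t) \<in> borel_measurable (\<mu> \<Otimes>\<^sub>M \<Omega>)"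
proof -
  have "(\<lambda>(x, (e, th)). Xpath \<alpha> x e th t) = (\<lambda>\<omega>. Xpath \<alpha> (fst \<omega>) (fst (snd \<omega>)) (snd (snd \<omega>)) t)"
    by (auto simp: fun_eq_iff)
  then show ?thesis using meas_Xpath[of \<alpha> t] by (simp add: measurable_cong_sets[OF sets_big refl])
qed

lemma lawX_eq: "lawX \<alpha> h t f = distr (\<mu> \<Otimes>\<^sub>M \<Omega>) borel (\<lambda>(x, (e, th)). Xpath \<alpha> x e th t)"
  unfolding lawX_def ..

lemma AE_good: "AE \<omega> in \<Omega>. (\<forall>n. 0 \<le> fst \<omega> n) \<and> (\<forall>B. \<exists>n. B < (\<Sum>i<n. fst \<omega> i)) \<and> (\<forall>n. 0 < snd \<omega> n \<and> snd \<omega> n \<le> 1)"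
proof -
  have sfe: "sigma_finite_measure Pe" by (intro prob_space_imp_sigma_finite prob_space_PiM prob_eps)
  have sft: "sigma_finite_measure (Pth h)" by (intro prob_space_imp_sigma_finite prob_space_PiM prob_theta[OF hm hpos hint])
  have 1: "AE \<omega> in \<Omega>. (\<forall>n. 0 \<le> fst \<omega> n) \<and> (\<forall>B. \<exists>n. B < (\<Sum>i<n. fst \<omega> i))"
    by (rule AE_fst_pair[OF sfe sft AE_good_e])
  have 2: "AE \<omega> in \<Omega>. \<forall>n. 0 < snd \<omega> n \<and> snd \<omega> n \<le> 1"
    by (rule AE_snd_pair[OF sfe sft AE_th[OF hm hpos hint]])
  from 1 2 show ?thesis by eventually_elim blast
qed

lemma AC: "absolutely_continuous mE (lawX \<alpha> h t f)"
  unfolding absolutely_continuous_def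
proof
  fix A assume A: "A \<in> null_sets mE"
  have Ab[measurable]: "A \<in> sets borel" using A sets_mE by (simp add: null_sets_def)
  interpret P: pair_sigma_finite \<mu> \<Omega> by (rule psf)
  have acmu: "null_sets mE \<subseteq> null_sets \<mu>"
    using absolutely_continuousI_density[of "\<lambda>x. ennreal (f x)" mE]
    by (simp add: absolutely_continuous_def measurable_cong_sets[OF sets_mE refl])
  have inner: "(\<integral>\<^sup>+ x. indicator A (Xpath \<alpha> x (fst \<omega>) (snd \<omega>) t) \<partial>\<mu>) = 0"
    if good: "(\<forall>n. 0 \<le> fst \<omega> n) \<and> (\<forall>B. \<exists>n. B < (\<Sum>i<n. fst \<omega> i)) \<and> (\<forall>n. 0 < snd \<omega> n \<and> snd \<omega> n \<le> 1)" for \<omega>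
  proof -
    obtain e th where \<omega>: "\<omega> = (e, th)" by (cases \<omega>)
    have e: "\<forall>n. 0 \<le> e n" and unb: "\<forall>B. \<exists>n. B < (\<Sum>i<n. e i)" and th: "\<forall>n. 0 < th n" "\<forall>n. th n \<le> 1"
      using good by (auto simp: \<omega>)
    define Z where "Z = {..0} \<union> (\<Union>n. (\<lambda>x. (exp t * Th th n) * x) -` A)"
    have "Z \<in> null_sets mE"
      unfolding Z_def
    proof (intro null_sets.Un null_sets_UN)
      show "{..0} \<in> null_sets mE" using mE_nonpos by (simp add: null_sets_def sets_mE)
      fix n show "(\<lambda>x. (exp t * Th th n) * x) -` A \<in> null_sets mE"
        by (rule mE_scale_null[OF _ A]) (use Th_pos[OF th(1)] in simp)
    qed
    then have Zn: "Z \<in> null_sets \<mu>" using acmu by blast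
    have "(\<integral>\<^sup>+ x. indicator A (Xpath \<alpha> x (fst \<omega>) (snd \<omega>) t) \<partial>\<mu>) \<le> (\<integral>\<^sup>+ x. indicator Z x \<partial>\<mu>)"
    proof (intro nn_integral_mono)
      fix x
      show "indicator A (Xpath \<alpha> x (fst \<omega>) (snd \<omega>) t) \<le> (indicator Z x :: ennreal)"
      proof (cases "x \<le> 0")
        case True then show ?thesis by (simp add: Z_def indicator_def)
      next
        case False
        then have x: "x > 0" by simp
        obtain N where N: "Xpath \<alpha> x e th t = exp t * x * Th th N"
          using Xpath_closed[OF a x e th unb] by blast
        show ?thesis
        proof (cases "Xpath \<alpha> x e th t \<in> A")
          case True
          then have "x \<in> Z" unfolding Z_def using N by (auto simp: mult.commute mult.left_commute)
          then show ?thesis using True by (simp add: \<omega>)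
        next
          case False then show ?thesis by (simp add: \<omega>)
        qed
      qed
    qed
    also have "\<dots> = emeasure \<mu> Z" using Zn by (intro nn_integral_indicator) auto
    also have "\<dots> = 0" using Zn by auto
    finally show ?thesis by simp
  qed
  have "emeasure (lawX \<alpha> h t f) A = (\<integral>\<^sup>+ y. indicator A y \<partial>lawX \<alpha> h t f)"
    by (simp add: lawX_eq)
  also have "\<dots> = (\<integral>\<^sup>+ z. indicator A ((\<lambda>(x, (e, th)). Xpath \<alpha> x e th t) z) \<partial>(\<mu> \<Otimes>\<^sub>M \<Omega>))"
    unfolding lawX_eq by (rule nn_integral_distr) (simp_all)
  also have "\<dots> = (\<integral>\<^sup>+ \<omega>. (\<integral>\<^sup>+ x. indicator A ((\<lambda>(x, (e, th)). Xpath \<alpha> x e th t) (x, \<omega>)) \<partial>\<mu>) \<partial>\<Omega>)"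
    by (rule P.nn_integral_snd[symmetric]) simp
  also have "\<dots> = (\<integral>\<^sup>+ \<omega>. 0 \<partial>\<Omega>)"
  proof (rule nn_integral_cong_AE)
    show "AE \<omega> in \<Omega>. (\<integral>\<^sup>+ x. indicator A ((\<lambda>(x, (e, th)). Xpath \<alpha> x e th t) (x, \<omega>)) \<partial>\<mu>) = 0"
      using AE_good by eventually_elim (simp add: case_prod_beta inner)
  qed
  finally have "emeasure (lawX \<alpha> h t f) A = 0" by simp
  moreover have "A \<in> sets (lawX \<alpha> h t f)" by (simp add: lawX_eq)
  ultimately show "A \<in> null_sets (lawX \<alpha> h t f)" by (simp add: null_sets_def)
qed

end

definition hh :: "(real \<Rightarrow> real) \<Rightarrow> real \<Rightarrow> real" where
  "hh h r = indicator {0<..<1} r * h r"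

definition Kr :: "(real \<Rightarrow> real) \<Rightarrow> real \<Rightarrow> real \<Rightarrow> real \<Rightarrow> real" where
  "Kr h t y x = indicator {0<..} x * hh h (y / (exp t * x)) / (exp t * x)^2"

context
  fixes h :: "real \<Rightarrow> real"
  assumes hm: "(\<lambda>r. indicator {0<..<1} r * h r) \<in> borel_measurable borel"
    and hpos: "\<forall>r\<in>{0<..<1}. 0 \<le> h r"
    and hint: "(\<integral>\<^sup>+ r. ennreal (indicator {0<..<1} r * h r * r) \<partial>lborel) = 1"
begin

lemma hh_meas[measurable]: "hh h \<in> borel_measurable borel"
  unfolding hh_def[abs_def] by (rule hm)

lemma hh_nn: "0 \<le> hh h r" using hpos by (auto simp: hh_def indicator_def)

lemma Kr_meas[measurable]: "(\<lambda>(y, x). Kr h t y x) \<in> borel_measurable (borel \<Otimes>\<^sub>M borel)"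
proof -
  have g: "(\<lambda>p::real \<times> real. fst p / (exp t * snd p)) \<in> borel_measurable (borel \<Otimes>\<^sub>M borel)"
    by measurable
  have hg: "(\<lambda>p::real \<times> real. hh h (fst p / (exp t * snd p))) \<in> borel_measurable (borel \<Otimes>\<^sub>M borel)"
    by (rule measurable_compose[OF g hh_meas])
  have i: "(\<lambda>p::real \<times> real. indicator {0<..} (snd p) :: real) \<in> borel_measurable (borel \<Otimes>\<^sub>M borel)"
    by measurable
  have d: "(\<lambda>p::real \<times> real. (exp t * snd p)^2) \<in> borel_measurable (borel \<Otimes>\<^sub>M borel)"
    by measurable
  have "(\<lambda>p::real \<times> real. indicator {0<..} (snd p) * hh h (fst p / (exp t * snd p)) / (exp t * snd p)^2) \<in> borel_measurable (borel \<Otimes>\<^sub>M borel)"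
    by (intro borel_measurable_divide borel_measurable_times i hg d)
  then show ?thesis unfolding Kr_def by (simp add: case_prod_beta)
qed

lemma Kr_meas1[measurable]: "(\<lambda>y. Kr h t y x) \<in> borel_measurable borel"
proof -
  have g: "(\<lambda>y::real. y / (exp t * x)) \<in> borel_measurable borel" by simp
  have hg: "(\<lambda>y::real. hh h (y / (exp t * x))) \<in> borel_measurable borel"
    by (rule measurable_compose[OF g hh_meas])
  show ?thesis unfolding Kr_def by (intro borel_measurable_divide borel_measurable_times hg) auto
qed

lemma Kr_nn: "0 \<le> Kr h t y x" unfolding Kr_def using hh_nn by simp

lemma theta_subst:
  assumes x: "x > 0" and B[measurable]: "B \<in> sets borel"
  shows "(\<integral>\<^sup>+ z. indicator B (exp t * x * z) \<partial>thetaM h) = (\<integral>\<^sup>+ y. ennreal (Kr h t y x) * indicator B y \<partial>mE)"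
proof -
  define k where "k = exp t * x"
  have k: "k > 0" using x by (simp add: k_def)
  define F where "F = (\<lambda>y. ennreal (indicator {0<..} y * y) * (ennreal (Kr h t y x) * indicator B y))"
  have m1: "(\<lambda>y::real. ennreal (indicator {0<..} y * y)) \<in> borel_measurable borel" by measurable
  have gm: "(\<lambda>y. ennreal (Kr h t y x) * indicator B y) \<in> borel_measurable borel"
    by (intro borel_measurable_times_ennreal measurable_compose[OF Kr_meas1 measurable_ennreal] borel_measurable_indicator B)
  have Fm: "F \<in> borel_measurable borel" unfolding F_def by (intro borel_measurable_times_ennreal m1 gm)
  have Fkm: "(\<lambda>z. F (0 + k * z)) \<in> borel_measurable borel"
    by (rule measurable_compose[OF _ Fm]) simp
  have "(\<integral>\<^sup>+ y. ennreal (Kr h t y x) * indicator B y \<partial>mE) = (\<integral>\<^sup>+ y. F y \<partial>lborel)"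
    unfolding mE_def F_def
    by (rule nn_integral_density) (use m1 gm in \<open>simp_all only: measurable_cong_sets[OF sets_lborel refl]\<close>)
  also have "\<dots> = ennreal \<bar>k\<bar> * (\<integral>\<^sup>+ z. F (0 + k * z) \<partial>lborel)"
    by (rule nn_integral_real_affine[OF Fm]) (use k in simp)
  also have "\<dots> = (\<integral>\<^sup>+ z. ennreal \<bar>k\<bar> * F (0 + k * z) \<partial>lborel)"
    by (rule nn_integral_cmult[symmetric]) (use Fkm in \<open>simp only: measurable_cong_sets[OF sets_lborel refl]\<close>)
  also have "\<dots> = (\<integral>\<^sup>+ z. ennreal (indicator {0<..<1} z * h z * z) * indicator B (exp t * x * z) \<partial>lborel)"
  proof (intro nn_integral_cong)
    fix z
    have eq: "\<bar>k\<bar> * (indicator {0<..} (0 + k * z) * (0 + k * z)) * Kr h t (0 + k * z) x = indicator {0<..<1} z * h z * z"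
    proof (cases "z > 0")
      case True
      have q: "(0 + k * z) / (exp t * x) = z" using k x by (simp add: k_def)
      have Kz: "Kr h t (0 + k * z) x = hh h z / k^2" unfolding Kr_def using x by (simp only: q k_def[symmetric]) simp
      have i1: "indicator {0<..} (0 + k * z) = (1::real)" using True k by (simp add: indicator_def)
      have "\<bar>k\<bar> * (indicator {0<..} (0 + k * z) * (0 + k * z)) * Kr h t (0 + k * z) x = hh h z * z"
        unfolding Kz i1 using k by (simp add: power2_eq_square field_simps)
      then show ?thesis by (simp add: hh_def)
    next
      case False
      then show ?thesis using k x by (simp add: Kr_def hh_def indicator_def zero_less_mult_iff)
    qed
    have n1: "0 \<le> indicator {0<..} (0 + k * z) * (0 + k * z)" by (simp add: indicator_def)
    have n2: "0 \<le> Kr h t (0 + k * z) x" by (rule Kr_nn)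
    show "ennreal \<bar>k\<bar> * F (0 + k * z)
        = ennreal (indicator {0<..<1} z * h z * z) * indicator B (exp t * x * z)"
    proof -
      have e1: "ennreal (\<bar>k\<bar> * (indicator {0<..} (0 + k * z) * (0 + k * z)) * Kr h t (0 + k * z) x)
          = ennreal \<bar>k\<bar> * ennreal (indicator {0<..} (0 + k * z) * (0 + k * z)) * ennreal (Kr h t (0 + k * z) x)"
        using n1 n2 by (simp add: ennreal_mult)
      have "ennreal \<bar>k\<bar> * F (0 + k * z) = (ennreal \<bar>k\<bar> * ennreal (indicator {0<..} (0 + k * z) * (0 + k * z)) * ennreal (Kr h t (0 + k * z) x)) * indicator B (0 + k * z)"
        unfolding F_def by (simp only: mult.assoc)
      also have "\<dots> = ennreal (indicator {0<..<1} z * h z * z) * indicator B (0 + k * z)"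
        by (simp only: e1[symmetric] eq)
      finally show ?thesis by (simp add: k_def)
    qed
  qed
  also have "\<dots> = (\<integral>\<^sup>+ z. indicator B (exp t * x * z) \<partial>thetaM h)"
    unfolding thetaM_def
  proof (rule nn_integral_density[symmetric])
    show "(\<lambda>z. ennreal (indicator {0<..<1} z * h z * z)) \<in> borel_measurable lborel" by (rule hm''[OF hm hpos hint])
    show "(\<lambda>z. indicator B (exp t * x * z) :: ennreal) \<in> borel_measurable lborel"
      by (simp only: measurable_cong_sets[OF sets_lborel refl]) (rule measurable_compose[OF _ borel_measurable_indicator[OF B]], simp)
  qed
  finally show ?thesis ..
qed

end


definition cc :: "real \<Rightarrow> real \<Rightarrow> real \<Rightarrow> real" where
  "cc \<alpha> t x = x powr \<alpha> * (exp (\<alpha> * t) - 1)"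

definition Q :: "real \<Rightarrow> real \<Rightarrow> real \<Rightarrow> ennreal" where
  "Q \<alpha> t x = (\<integral>\<^sup>+ e. indicator {..cc \<alpha> t x} (e 0) * indicator {cc \<alpha> t x<..} (e (1::nat)) \<partial>Pe)"

lemma sf_Pe: "sigma_finite_measure Pe" by (intro prob_space_imp_sigma_finite prob_space_PiM prob_eps)

lemma cc_meas[measurable]: "cc \<alpha> t \<in> borel_measurable borel"
  unfolding cc_def[abs_def] by measurable

lemma Q_meas[measurable]: "Q \<alpha> t \<in> borel_measurable borel"
proof -
  interpret sigma_finite_measure Pe by (rule sf_Pe)
  have m: "(\<lambda>p. snd p i) \<in> borel_measurable (borel \<Otimes>\<^sub>M Pe)" for i :: nat
  proof -
    have "(\<lambda>p. snd p i) \<in> measurable (borel \<Otimes>\<^sub>M Pe) epsM"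
      by (rule measurable_compose[OF measurable_snd measurable_component_singleton]) simp
    then show ?thesis by (simp add: measurable_cong_sets[OF refl sets_eps])
  qed
  note m[measurable]
  have "(\<lambda>(x, e). indicator {..cc \<alpha> t x} (e 0) * indicator {cc \<alpha> t x<..} (e (1::nat)) :: ennreal) \<in> borel_measurable (borel \<Otimes>\<^sub>M Pe)"
  proof -
    have "(\<lambda>(x, e). indicator {..cc \<alpha> t x} (e 0) * indicator {cc \<alpha> t x<..} (e (1::nat)) :: ennreal)
        = (\<lambda>p. indicator {p \<in> space (borel \<Otimes>\<^sub>M Pe). snd p 0 \<le> cc \<alpha> t (fst p) \<and> cc \<alpha> t (fst p) < snd p 1} p)"
      by (auto simp: fun_eq_iff indicator_def space_pair_measure space_PiM)
    moreover have "{p \<in> space (borel \<Otimes>\<^sub>M Pe). snd p 0 \<le> cc \<alpha> t (fst p) \<and> cc \<alpha> t (fst p) < snd p 1} \<in> sets (borel \<Otimes>\<^sub>M Pe)"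
      by measurable
    ultimately show ?thesis by simp
  qed
  then show ?thesis unfolding Q_def[abs_def] by measurable
qed

lemma Q_le1: "Q \<alpha> t x \<le> 1"
proof -
  interpret prob_space Pe by (intro prob_space_PiM prob_eps)
  have "Q \<alpha> t x \<le> (\<integral>\<^sup>+ e. 1 \<partial>Pe)" unfolding Q_def
    by (intro nn_integral_mono) (auto simp: indicator_def)
  then show ?thesis by (simp add: emeasure_space_1)
qed

lemma Q_fin: "Q \<alpha> t x \<noteq> \<infinity>" using Q_le1[of \<alpha> t x] by (auto simp: top_unique)

lemma Q_pos:
  assumes a: "\<alpha> > 0" and t: "t > 0" and x: "x > 0"
  shows "0 < Q \<alpha> t x"
proof -
  define c where "c = cc \<alpha> t x"
  have c: "c > 0" unfolding c_def cc_def using a t x by simp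
  define A where "A = (\<lambda>i::nat. if i = 0 then {..c} else {c<..})"
  have S: "(\<lambda>e. indicator {..c} (e 0) * indicator {c<..} (e (1::nat)) :: ennreal)
      = indicator (prod_emb UNIV (\<lambda>_. epsM) {0,1} (Pi\<^sub>E {0,1} A))"
    by (auto simp: fun_eq_iff indicator_def prod_emb_def PiE_iff A_def space_PiM)
  have "Q \<alpha> t x = emeasure Pe (prod_emb UNIV (\<lambda>_. epsM) {0,1} (Pi\<^sub>E {0,1} A))"
    unfolding Q_def c_def[symmetric] S by (rule nn_integral_indicator) (auto intro!: sets_PiM_I simp: A_def)
  also have "\<dots> = (\<Prod>i\<in>{0,1}. emeasure epsM (A i))"
    by (rule emeasure_PiM_emb) (auto simp: prob_eps A_def)
  also have "\<dots> = emeasure epsM {..c} * emeasure epsM {c<..}" by (simp add: A_def)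
  also have "\<dots> = ennreal (1 - exp (- c)) * ennreal (exp (- c))"
    using eps_le[of c] eps_gt[of c] c by (simp add: atMost_def greaterThan_def)
  finally show ?thesis using c by (simp add: ennreal_mult[symmetric])
qed

context
  fixes h :: "real \<Rightarrow> real"
  assumes hm: "(\<lambda>r. indicator {0<..<1} r * h r) \<in> borel_measurable borel"
    and hpos: "\<forall>r\<in>{0<..<1}. 0 \<le> h r"
    and hint: "(\<integral>\<^sup>+ r. ennreal (indicator {0<..<1} r * h r * r) \<partial>lborel) = 1"
begin

lemma sf_Pth: "sigma_finite_measure (Pth h)"
  by (intro prob_space_imp_sigma_finite prob_space_PiM prob_theta[OF hm hpos hint])

lemma theta_comp:
  assumes g: "g \<in> borel_measurable borel"
  shows "(\<integral>\<^sup>+ th. g (th 0) \<partial>Pth h) = (\<integral>\<^sup>+ z. g z \<partial>thetaM h)"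
proof -
  have "(\<integral>\<^sup>+ z. g z \<partial>thetaM h) = (\<integral>\<^sup>+ z. g z \<partial>distr (Pth h) (thetaM h) (\<lambda>\<omega>. \<omega> 0))"
    by (subst product_prob_space.PiM_component[OF pps_theta[OF hm hpos hint], of 0 UNIV]) simp_all
  also have "\<dots> = (\<integral>\<^sup>+ th. g (th 0) \<partial>Pth h)"
    by (rule nn_integral_distr) (use g in \<open>simp_all add: measurable_cong_sets[OF sets_theta refl]\<close>)
  finally show ?thesis ..
qed

lemma Omega_int:
  assumes B[measurable]: "B \<in> sets borel"
  shows "(\<integral>\<^sup>+ \<omega>. indicator {..cc \<alpha> t x} (fst \<omega> 0) * indicator {cc \<alpha> t x<..} (fst \<omega> (1::nat)) * indicator B (exp t * x * snd \<omega> 0) \<partial>(Pe \<Otimes>\<^sub>M Pth h))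
      = Q \<alpha> t x * (\<integral>\<^sup>+ z. indicator B (exp t * x * z) \<partial>thetaM h)"
proof -
  interpret T: sigma_finite_measure "Pth h" by (rule sf_Pth)
  define a where "a = (\<lambda>e::nat \<Rightarrow> real. indicator {..cc \<alpha> t x} (e 0) * indicator {cc \<alpha> t x<..} (e (1::nat)) :: ennreal)"
  define b where "b = (\<lambda>th::nat \<Rightarrow> real. indicator B (exp t * x * th 0) :: ennreal)"
  have am: "a \<in> borel_measurable Pe"
  proof -
    have m: "(\<lambda>e. e i) \<in> borel_measurable Pe" for i :: nat
      using measurable_component_singleton[of i UNIV "\<lambda>_. epsM"] by (simp add: measurable_cong_sets[OF refl sets_eps])
    show ?thesis unfolding a_def
      by (intro borel_measurable_times_ennreal measurable_compose[OF m borel_measurable_indicator]) auto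
  qed
  have bm: "b \<in> borel_measurable (Pth h)"
  proof -
    have m: "(\<lambda>e. e (0::nat)) \<in> borel_measurable (Pth h)"
      using measurable_component_singleton[of 0 UNIV "\<lambda>_. thetaM h"] by (simp add: measurable_cong_sets[OF refl sets_theta])
    have m2: "(\<lambda>e. exp t * x * e (0::nat)) \<in> borel_measurable (Pth h)"
      by (intro borel_measurable_times m) auto
    show ?thesis unfolding b_def
      by (rule measurable_compose[OF m2 borel_measurable_indicator[OF B]])
  qed
  have "(\<integral>\<^sup>+ \<omega>. indicator {..cc \<alpha> t x} (fst \<omega> 0) * indicator {cc \<alpha> t x<..} (fst \<omega> (1::nat)) * indicator B (exp t * x * snd \<omega> 0) \<partial>(Pe \<Otimes>\<^sub>M Pth h))
      = (\<integral>\<^sup>+ \<omega>. a (fst \<omega>) * b (snd \<omega>) \<partial>(Pe \<Otimes>\<^sub>M Pth h))"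
    by (simp add: a_def b_def)
  also have "\<dots> = (\<integral>\<^sup>+ e. \<integral>\<^sup>+ th. a e * b th \<partial>Pth h \<partial>Pe)"
    by (rule T.nn_integral_fst[symmetric, where f="\<lambda>\<omega>. a (fst \<omega>) * b (snd \<omega>)", simplified])
       (intro borel_measurable_times_ennreal measurable_compose[OF measurable_fst am] measurable_compose[OF measurable_snd bm])
  also have "\<dots> = (\<integral>\<^sup>+ e. a e * (\<integral>\<^sup>+ th. b th \<partial>Pth h) \<partial>Pe)"
    by (intro nn_integral_cong nn_integral_cmult bm)
  also have "\<dots> = Q \<alpha> t x * (\<integral>\<^sup>+ th. b th \<partial>Pth h)"
    by (subst nn_integral_multc[OF am]) (simp add: Q_def a_def)
  also have "(\<integral>\<^sup>+ th. b th \<partial>Pth h) = (\<integral>\<^sup>+ z. indicator B (exp t * x * z) \<partial>thetaM h)"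
    unfolding b_def by (rule theta_comp) simp
  finally show ?thesis .
qed

end


definition pk :: "real \<Rightarrow> (real \<Rightarrow> real) \<Rightarrow> real \<Rightarrow> real \<Rightarrow> real \<Rightarrow> real" where
  "pk \<alpha> h t y x = enn2real (Q \<alpha> t x) * Kr h t y x"

context
  fixes \<alpha> :: real and h :: "real \<Rightarrow> real" and t :: real
  assumes a: "0 < \<alpha>"
    and hm: "(\<lambda>r. indicator {0<..<1} r * h r) \<in> borel_measurable borel"
    and hpos: "\<forall>r\<in>{0<..<1}. 0 \<le> h r"
    and hint: "(\<integral>\<^sup>+ r. ennreal (indicator {0<..<1} r * h r * r) \<partial>lborel) = 1"
    and tpos: "0 < t"
begin

lemma pk_meas: "(\<lambda>(y, x). pk \<alpha> h t y x) \<in> borel_measurable (borel \<Otimes>\<^sub>M borel)"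
proof -
  have q: "(\<lambda>p::real\<times>real. enn2real (Q \<alpha> t (snd p))) \<in> borel_measurable (borel \<Otimes>\<^sub>M borel)"
    by (intro measurable_compose[OF measurable_snd] measurable_compose[OF Q_meas] borel_measurable_enn2real) simp
  have k: "(\<lambda>p::real\<times>real. Kr h t (fst p) (snd p)) \<in> borel_measurable (borel \<Otimes>\<^sub>M borel)"
    using Kr_meas[OF hm hpos hint, of t] by (simp add: case_prod_beta)
  have "(\<lambda>p::real\<times>real. enn2real (Q \<alpha> t (snd p)) * Kr h t (fst p) (snd p)) \<in> borel_measurable (borel \<Otimes>\<^sub>M borel)"
    by (rule borel_measurable_times[OF q k])
  then show ?thesis by (simp add: pk_def case_prod_beta)
qed

lemma pk_meas_swap: "(\<lambda>(x, y). pk \<alpha> h t y x) \<in> borel_measurable (borel \<Otimes>\<^sub>M borel)"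
proof -
  have "(\<lambda>(y, x). pk \<alpha> h t y x) \<circ> (\<lambda>(x, y). (y, x)) \<in> borel_measurable (borel \<Otimes>\<^sub>M borel)"
    by (rule measurable_comp[OF measurable_pair_swap' pk_meas])
  then show ?thesis by (simp add: comp_def case_prod_beta)
qed

lemma pk_nn: "0 \<le> pk \<alpha> h t y x"
  unfolding pk_def by (intro mult_nonneg_nonneg enn2real_nonneg Kr_nn[OF hm hpos hint])

lemma ennreal_pk: "ennreal (pk \<alpha> h t y x) = Q \<alpha> t x * ennreal (Kr h t y x)"
  unfolding pk_def using Kr_nn[OF hm hpos hint] Q_fin
  by (simp add: ennreal_mult ennreal_enn2real_if)

lemma Kr_nonpos: "x \<le> 0 \<Longrightarrow> Kr h t y x = 0"
  by (simp add: Kr_def)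

lemma sets_mEmE: "sets (mE \<Otimes>\<^sub>M mE) = sets (borel \<Otimes>\<^sub>M borel)"
  by (rule sets_pair_measure_cong[OF sets_mE sets_mE])

lemma pk_meas_mE: "(\<lambda>(y, x). pk \<alpha> h t y x) \<in> borel_measurable (mE \<Otimes>\<^sub>M mE)"
  using pk_meas by (simp add: measurable_cong_sets[OF sets_mEmE refl])
lemma pk_meas_swap_mE: "(\<lambda>(x, y). pk \<alpha> h t y x) \<in> borel_measurable (mE \<Otimes>\<^sub>M mE)"
  using pk_meas_swap by (simp add: measurable_cong_sets[OF sets_mEmE refl])

lemma inner_eq:
  assumes B[measurable]: "B \<in> sets borel"
  shows "indicator {0<..} x * (Q \<alpha> t x * (\<integral>\<^sup>+ z. indicator B (exp t * x * z) \<partial>thetaM h))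
        = (\<integral>\<^sup>+ y. ennreal (pk \<alpha> h t y x) * indicator B y \<partial>mE)"
proof (cases "x > 0")
  case False then show ?thesis by (simp add: ennreal_pk Kr_nonpos)
next
  case x: True
  have km: "(\<lambda>y. ennreal (Kr h t y x) * indicator B y) \<in> borel_measurable mE"
    using Kr_meas1[OF hm hpos hint, of t x] by (simp add: measurable_cong_sets[OF sets_mE refl])
  have "(\<integral>\<^sup>+ y. ennreal (pk \<alpha> h t y x) * indicator B y \<partial>mE) = (\<integral>\<^sup>+ y. Q \<alpha> t x * (ennreal (Kr h t y x) * indicator B y) \<partial>mE)"
    by (simp add: ennreal_pk mult.assoc)
  also have "\<dots> = Q \<alpha> t x * (\<integral>\<^sup>+ y. ennreal (Kr h t y x) * indicator B y \<partial>mE)"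
    by (rule nn_integral_cmult[OF km])
  finally show ?thesis using x by (simp add: theta_subst[OF hm hpos hint x B])
qed

lemma pkB_meas: "(\<lambda>(x, y). ennreal (pk \<alpha> h t y x) * indicator B y) \<in> borel_measurable (mE \<Otimes>\<^sub>M mE)"
  if B: "B \<in> sets borel"
proof -
  have p2: "(\<lambda>p::real\<times>real. pk \<alpha> h t (snd p) (fst p)) \<in> borel_measurable (mE \<Otimes>\<^sub>M mE)"
    using pk_meas_swap_mE by (simp add: case_prod_beta)
  have i2: "(\<lambda>p::real\<times>real. indicator B (snd p) :: ennreal) \<in> borel_measurable (mE \<Otimes>\<^sub>M mE)"
    by (rule measurable_compose[OF measurable_snd]) (use B in \<open>simp add: measurable_cong_sets[OF sets_mE refl]\<close>)
  have "(\<lambda>p::real\<times>real. ennreal (pk \<alpha> h t (snd p) (fst p)) * indicator B (snd p)) \<in> borel_measurable (mE \<Otimes>\<^sub>M mE)"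
    by (intro borel_measurable_times_ennreal i2 measurable_compose[OF p2 measurable_ennreal])
  then show ?thesis by (simp add: case_prod_beta)
qed

lemma Z_meas: "(\<lambda>y. \<integral>\<^sup>+ x. ennreal (pk \<alpha> h t y x) \<partial>mE) \<in> borel_measurable mE"
proof -
  interpret ME: sigma_finite_measure mE by (rule sf_mE)
  have "(\<lambda>(y, x). ennreal (pk \<alpha> h t y x)) \<in> borel_measurable (mE \<Otimes>\<^sub>M mE)"
    using pk_meas_mE by (simp add: case_prod_beta)
  then show ?thesis by (rule ME.borel_measurable_nn_integral)
qed

lemma pos: "AE y in mE. 0 < (\<integral>\<^sup>+ x. ennreal (pk \<alpha> h t y x) \<partial>mE)"
proof -
  interpret ME: sigma_finite_measure mE by (rule sf_mE)
  interpret P2: pair_sigma_finite mE mE by (simp add: pair_sigma_finite_def sf_mE)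
  interpret TH: prob_space "thetaM h" by (rule prob_theta[OF hm hpos hint])
  interpret P3: pair_sigma_finite mE "thetaM h" by (simp add: pair_sigma_finite_def sf_mE TH.sigma_finite_measure_axioms)
  let ?Z = "\<lambda>y. \<integral>\<^sup>+ x. ennreal (pk \<alpha> h t y x) \<partial>mE"
  define N0 where "N0 = {y \<in> space mE. ?Z y = 0}"
  have N0m: "N0 \<in> sets mE" unfolding N0_def using Z_meas by measurable
  have N0b[measurable]: "N0 \<in> sets borel" using N0m by (simp add: sets_mE)
  have "emeasure mE N0 = 0"
  proof (rule ccontr)
    assume N0pos: "emeasure mE N0 \<noteq> 0"
    let ?T = "\<lambda>x. \<integral>\<^sup>+ z. indicator N0 (exp t * x * z) \<partial>thetaM h"
    have "0 = (\<integral>\<^sup>+ y. ?Z y * indicator N0 y \<partial>mE)"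
    proof (rule nn_integral_0_iff_AE[THEN iffD2, symmetric])
      show "(\<lambda>y. ?Z y * indicator N0 y) \<in> borel_measurable mE"
        by (intro borel_measurable_times_ennreal Z_meas borel_measurable_indicator N0m)
      show "AE y in mE. ?Z y * indicator N0 y = 0"
        by (rule AE_I2) (simp add: N0_def indicator_def)
    qed
    also have "\<dots> = (\<integral>\<^sup>+ y. \<integral>\<^sup>+ x. ennreal (pk \<alpha> h t y x) * indicator N0 y \<partial>mE \<partial>mE)"
    proof (intro nn_integral_cong)
      fix y
      have "(\<lambda>x. (\<lambda>(x, y). ennreal (pk \<alpha> h t y x) * indicator N0 y) (x, y)) \<in> borel_measurable mE"
        by (rule measurable_compose[OF measurable_Pair2' pkB_meas[OF N0b]]) simp
      then have "(\<lambda>x. ennreal (pk \<alpha> h t y x)) \<in> borel_measurable mE"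
      proof -
        have pe: "(\<lambda>(y, x). ennreal (pk \<alpha> h t y x)) \<in> borel_measurable (mE \<Otimes>\<^sub>M mE)"
          using pk_meas_mE by (simp add: case_prod_beta)
        have "(\<lambda>x. (\<lambda>(y, x). ennreal (pk \<alpha> h t y x)) (y, x)) \<in> borel_measurable mE"
          by (rule measurable_compose[OF measurable_Pair1'[of y mE mE] pe]) simp
        then show ?thesis by simp
      qed
      then show "?Z y * indicator N0 y = (\<integral>\<^sup>+ x. ennreal (pk \<alpha> h t y x) * indicator N0 y \<partial>mE)"
        by (rule nn_integral_multc[symmetric])
    qed
    also have "\<dots> = (\<integral>\<^sup>+ x. \<integral>\<^sup>+ y. ennreal (pk \<alpha> h t y x) * indicator N0 y \<partial>mE \<partial>mE)"
      by (rule P2.Fubini'[OF pkB_meas[OF N0b]])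
    also have "\<dots> = (\<integral>\<^sup>+ x. indicator {0<..} x * (Q \<alpha> t x * ?T x) \<partial>mE)"
      by (intro nn_integral_cong) (simp add: inner_eq[OF N0b])
    finally have I0: "(\<integral>\<^sup>+ x. indicator {0<..} x * (Q \<alpha> t x * ?T x) \<partial>mE) = 0" by simp
    have sMT: "sets (mE \<Otimes>\<^sub>M thetaM h) = sets (borel \<Otimes>\<^sub>M borel)"
      by (rule sets_pair_measure_cong[OF sets_mE sets_theta])
    have sTM: "sets (thetaM h \<Otimes>\<^sub>M mE) = sets (borel \<Otimes>\<^sub>M borel)"
      by (rule sets_pair_measure_cong[OF sets_theta sets_mE])
    have pmb: "(\<lambda>(x, z). indicator N0 (exp t * x * z) :: ennreal) \<in> borel_measurable (borel \<Otimes>\<^sub>M borel)"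
    proof -
      have "(\<lambda>p::real\<times>real. exp t * fst p * snd p) \<in> borel_measurable (borel \<Otimes>\<^sub>M borel)" by measurable
      from measurable_compose[OF this borel_measurable_indicator[OF N0b]] show ?thesis
        by (simp add: case_prod_beta)
    qed
    have pm: "(\<lambda>(x, z). indicator N0 (exp t * x * z) :: ennreal) \<in> borel_measurable (mE \<Otimes>\<^sub>M thetaM h)"
      using pmb by (simp add: measurable_cong_sets[OF sMT refl])
    have pmb': "(\<lambda>(z, x). indicator N0 (exp t * x * z) :: ennreal) \<in> borel_measurable (borel \<Otimes>\<^sub>M borel)"
    proof -
      have "(\<lambda>p::real\<times>real. exp t * snd p * fst p) \<in> borel_measurable (borel \<Otimes>\<^sub>M borel)" by measurable
      from measurable_compose[OF this borel_measurable_indicator[OF N0b]] show ?thesis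
        by (simp add: case_prod_beta)
    qed
    have pm': "(\<lambda>(z, x). indicator N0 (exp t * x * z) :: ennreal) \<in> borel_measurable (thetaM h \<Otimes>\<^sub>M mE)"
      using pmb' by (simp add: measurable_cong_sets[OF sTM refl])
    have Tm: "?T \<in> borel_measurable mE" by (rule TH.borel_measurable_nn_integral[OF pm])
    let ?W = "\<lambda>z. \<integral>\<^sup>+ x. indicator N0 (exp t * x * z) \<partial>mE"
    have Wm: "?W \<in> borel_measurable (thetaM h)" by (rule ME.borel_measurable_nn_integral[OF pm'])
    have qm: "Q \<alpha> t \<in> borel_measurable mE" by (simp add: measurable_cong_sets[OF sets_mE refl])
    have "AE x in mE. indicator {0<..} x * (Q \<alpha> t x * ?T x) = 0"
      using I0 by (subst (asm) nn_integral_0_iff_AE) (auto intro!: borel_measurable_times_ennreal Tm qm simp: measurable_cong_sets[OF sets_mE refl])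
    moreover have "AE x in mE. 0 < x"
      by (rule AE_I'[of "{..0}"]) (auto simp: mE_nonpos sets_mE)
    ultimately have "AE x in mE. ?T x = 0"
    proof eventually_elim
      case (elim x)
      then show ?case using Q_pos[OF a tpos elim(2)] by (auto simp: indicator_def)
    qed
    then have "(\<integral>\<^sup>+ x. ?T x \<partial>mE) = 0" by (simp add: nn_integral_0_iff_AE[OF Tm])
    also have "(\<integral>\<^sup>+ x. ?T x \<partial>mE) = (\<integral>\<^sup>+ z. ?W z \<partial>thetaM h)"
      by (rule P3.Fubini'[OF pm, symmetric])
    finally have "AE z in thetaM h. ?W z = 0" by (simp add: nn_integral_0_iff_AE[OF Wm])
    moreover have "AE z in thetaM h. ?W z \<noteq> 0"
      using AE_theta[OF hm hpos hint]
    proof eventually_elim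
      case (elim z)
      define c where "c = exp t * z"
      have c: "c > 0" using elim by (simp add: c_def)
      have "?W z = (\<integral>\<^sup>+ x. indicator ((\<lambda>x. c * x) -` N0) x \<partial>mE)"
        by (intro nn_integral_cong) (simp add: c_def indicator_def mult_ac)
      also have "\<dots> = emeasure mE ((\<lambda>x. c * x) -` N0)"
        by (rule nn_integral_indicator) (simp add: sets_mE measurable_sets_borel[OF _ N0b])
      finally have "emeasure mE N0 = ennreal (c * c) * ?W z" using mE_scale[OF c N0b] by simp
      then show ?case using N0pos by auto
    qed
    ultimately have "AE z in thetaM h. False" by eventually_elim simp
    then show False by (simp add: TH.AE_False)
  qed
  then have "N0 \<in> null_sets mE" using N0m by (simp add: null_sets_def)
  then show ?thesis
    by (rule AE_I') (auto simp: N0_def)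
qed

context
  fixes f :: "real \<Rightarrow> real"
  assumes fD: "f \<in> Dens mE"
begin

abbreviation "\<mu>' \<equiv> density mE (\<lambda>x. ennreal (f x))"
abbreviation "\<Omega>' \<equiv> Pe \<Otimes>\<^sub>M Pth h"

lemma LB:
  assumes B[measurable]: "B \<in> sets borel"
  shows "(\<integral>\<^sup>+ y. (\<integral>\<^sup>+ x. ennreal (pk \<alpha> h t y x * f x) \<partial>mE) * indicator B y \<partial>mE) \<le> emeasure (lawX \<alpha> h t f) B"
proof -
  interpret Om: sigma_finite_measure \<Omega>' by (rule sf_Omega[OF a hm hpos hint tpos fD])
  interpret ME: sigma_finite_measure mE by (rule sf_mE)
  interpret P2: pair_sigma_finite mE mE by (simp add: pair_sigma_finite_def sf_mE)
  note fm' = fm[OF a hm hpos hint tpos fD]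
  let ?F = "\<lambda>(x, (e, th)). Xpath \<alpha> x e th t"
  have Fm: "?F \<in> borel_measurable (\<mu>' \<Otimes>\<^sub>M \<Omega>')" by (rule meas_F[OF a hm hpos hint tpos fD])
  have IBF: "(\<lambda>z. indicator B (?F z) :: ennreal) \<in> borel_measurable (\<mu>' \<Otimes>\<^sub>M \<Omega>')"
    by (rule measurable_compose[OF Fm borel_measurable_indicator[OF B]])
  have 1: "emeasure (lawX \<alpha> h t f) B = (\<integral>\<^sup>+ x. \<integral>\<^sup>+ \<omega>. indicator B (Xpath \<alpha> x (fst \<omega>) (snd \<omega>) t) \<partial>\<Omega>' \<partial>\<mu>')"
  proof -
    have "emeasure (lawX \<alpha> h t f) B = (\<integral>\<^sup>+ y. indicator B y \<partial>lawX \<alpha> h t f)"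
      by (simp add: lawX_eq[OF a hm hpos hint tpos fD])
    also have "\<dots> = (\<integral>\<^sup>+ z. indicator B (?F z) \<partial>(\<mu>' \<Otimes>\<^sub>M \<Omega>'))"
      unfolding lawX_eq[OF a hm hpos hint tpos fD] by (rule nn_integral_distr[OF Fm]) simp
    also have "\<dots> = (\<integral>\<^sup>+ x. \<integral>\<^sup>+ \<omega>. indicator B (?F (x, \<omega>)) \<partial>\<Omega>' \<partial>\<mu>')"
      by (rule Om.nn_integral_fst[symmetric, OF IBF])
    finally show ?thesis by (simp add: case_prod_beta)
  qed
  have 2: "(\<integral>\<^sup>+ x. indicator {0<..} x * (Q \<alpha> t x * (\<integral>\<^sup>+ z. indicator B (exp t * x * z) \<partial>thetaM h)) \<partial>\<mu>')
      \<le> (\<integral>\<^sup>+ x. \<integral>\<^sup>+ \<omega>. indicator B (Xpath \<alpha> x (fst \<omega>) (snd \<omega>) t) \<partial>\<Omega>' \<partial>\<mu>')"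
  proof (intro nn_integral_mono)
    fix x
    show "indicator {0<..} x * (Q \<alpha> t x * (\<integral>\<^sup>+ z. indicator B (exp t * x * z) \<partial>thetaM h))
      \<le> (\<integral>\<^sup>+ \<omega>. indicator B (Xpath \<alpha> x (fst \<omega>) (snd \<omega>) t) \<partial>\<Omega>')"
    proof (cases "x > 0")
      case False then show ?thesis by simp
    next
      case x: True
      have "indicator {0<..} x * (Q \<alpha> t x * (\<integral>\<^sup>+ z. indicator B (exp t * x * z) \<partial>thetaM h))
          = (\<integral>\<^sup>+ \<omega>. indicator {..cc \<alpha> t x} (fst \<omega> 0) * indicator {cc \<alpha> t x<..} (fst \<omega> (1::nat)) * indicator B (exp t * x * snd \<omega> 0) \<partial>\<Omega>')"
        using x Omega_int[OF hm hpos hint B, of \<alpha> t x] by simp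
      also have "\<dots> \<le> (\<integral>\<^sup>+ \<omega>. indicator B (Xpath \<alpha> x (fst \<omega>) (snd \<omega>) t) \<partial>\<Omega>')"
      proof (rule nn_integral_mono_AE)
        show "AE \<omega> in \<Omega>'. indicator {..cc \<alpha> t x} (fst \<omega> 0) * indicator {cc \<alpha> t x<..} (fst \<omega> (1::nat)) * indicator B (exp t * x * snd \<omega> 0)
            \<le> (indicator B (Xpath \<alpha> x (fst \<omega>) (snd \<omega>) t) :: ennreal)"
          using AE_good[OF a hm hpos hint tpos fD]
        proof eventually_elim
          case (elim \<omega>)
          show ?case
          proof (cases "fst \<omega> 0 \<le> cc \<alpha> t x \<and> cc \<alpha> t x < fst \<omega> 1")
            case False then show ?thesis by (auto simp: indicator_def)
          next
            case True
            have "Xpath \<alpha> x (fst \<omega>) (snd \<omega>) t = exp t * x * snd \<omega> 0"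
              by (rule Xpath_one_jump[OF a x]) (use elim True in \<open>auto simp: cc_def\<close>)
            then show ?thesis using True by (simp add: indicator_def)
          qed
        qed
      qed
      finally show ?thesis .
    qed
  qed
  have 3: "(\<integral>\<^sup>+ x. indicator {0<..} x * (Q \<alpha> t x * (\<integral>\<^sup>+ z. indicator B (exp t * x * z) \<partial>thetaM h)) \<partial>\<mu>')
      = (\<integral>\<^sup>+ x. (\<integral>\<^sup>+ y. ennreal (pk \<alpha> h t y x) * indicator B y \<partial>mE) \<partial>\<mu>')"
  proof (intro nn_integral_cong)
    fix x
    show "indicator {0<..} x * (Q \<alpha> t x * (\<integral>\<^sup>+ z. indicator B (exp t * x * z) \<partial>thetaM h))
        = (\<integral>\<^sup>+ y. ennreal (pk \<alpha> h t y x) * indicator B y \<partial>mE)"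
    proof (cases "x > 0")
      case False then show ?thesis by (simp add: ennreal_pk Kr_nonpos)
    next
      case x: True
      have km: "(\<lambda>y. ennreal (Kr h t y x) * indicator B y) \<in> borel_measurable mE"
        using Kr_meas1[OF hm hpos hint, of t x] by (simp add: measurable_cong_sets[OF sets_mE refl])
      have "(\<integral>\<^sup>+ y. ennreal (pk \<alpha> h t y x) * indicator B y \<partial>mE) = (\<integral>\<^sup>+ y. Q \<alpha> t x * (ennreal (Kr h t y x) * indicator B y) \<partial>mE)"
        by (simp add: ennreal_pk mult.assoc)
      also have "\<dots> = Q \<alpha> t x * (\<integral>\<^sup>+ y. ennreal (Kr h t y x) * indicator B y \<partial>mE)"
        by (rule nn_integral_cmult[OF km])
      finally show ?thesis using x by (simp add: theta_subst[OF hm hpos hint x B])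
    qed
  qed
  have inner_m: "(\<lambda>x. \<integral>\<^sup>+ y. ennreal (pk \<alpha> h t y x) * indicator B y \<partial>mE) \<in> borel_measurable mE"
  proof -
    have "(\<lambda>(x, y). ennreal (pk \<alpha> h t y x) * indicator B y) \<in> borel_measurable (mE \<Otimes>\<^sub>M mE)"
      using pk_meas_swap_mE by (simp add: case_prod_beta)
    then show ?thesis by (rule ME.borel_measurable_nn_integral)
  qed
  have 4: "(\<integral>\<^sup>+ x. (\<integral>\<^sup>+ y. ennreal (pk \<alpha> h t y x) * indicator B y \<partial>mE) \<partial>\<mu>')
      = (\<integral>\<^sup>+ x. \<integral>\<^sup>+ y. ennreal (pk \<alpha> h t y x * f x) * indicator B y \<partial>mE \<partial>mE)"
  proof -
    have "(\<integral>\<^sup>+ x. (\<integral>\<^sup>+ y. ennreal (pk \<alpha> h t y x) * indicator B y \<partial>mE) \<partial>\<mu>')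
        = (\<integral>\<^sup>+ x. ennreal (f x) * (\<integral>\<^sup>+ y. ennreal (pk \<alpha> h t y x) * indicator B y \<partial>mE) \<partial>mE)"
      by (rule nn_integral_density[OF _ inner_m]) (use fm' in \<open>simp add: measurable_cong_sets[OF sets_mE refl]\<close>)
    also have "\<dots> = (\<integral>\<^sup>+ x. \<integral>\<^sup>+ y. ennreal (pk \<alpha> h t y x * f x) * indicator B y \<partial>mE \<partial>mE)"
    proof (intro nn_integral_cong)
      fix x
      have km: "(\<lambda>y. ennreal (pk \<alpha> h t y x) * indicator B y) \<in> borel_measurable mE"
      proof -
        have "(\<lambda>y. (\<lambda>(x, y). pk \<alpha> h t y x) (Pair x y)) \<in> borel_measurable mE"
          by (rule measurable_compose[OF measurable_Pair1' pk_meas_swap_mE]) simp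
        then have "(\<lambda>y. pk \<alpha> h t y x) \<in> borel_measurable mE" by simp
        then show ?thesis
          by (intro borel_measurable_times_ennreal measurable_compose[OF _ measurable_ennreal])
             (auto simp: measurable_cong_sets[OF sets_mE refl])
      qed
      have "ennreal (f x) * (\<integral>\<^sup>+ y. ennreal (pk \<alpha> h t y x) * indicator B y \<partial>mE) = (\<integral>\<^sup>+ y. ennreal (f x) * (ennreal (pk \<alpha> h t y x) * indicator B y) \<partial>mE)"
        by (rule nn_integral_cmult[OF km, symmetric])
      also have "\<dots> = (\<integral>\<^sup>+ y. ennreal (pk \<alpha> h t y x * f x) * indicator B y \<partial>mE)"
      proof (intro nn_integral_cong)
        fix y
        have e: "ennreal (pk \<alpha> h t y x * f x) = ennreal (pk \<alpha> h t y x) * ennreal (f x)" by (rule ennreal_mult'[OF pk_nn])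
        show "ennreal (f x) * (ennreal (pk \<alpha> h t y x) * indicator B y) = ennreal (pk \<alpha> h t y x * f x) * indicator B y"
          unfolding e by (simp only: ac_simps)
      qed
      finally show "ennreal (f x) * (\<integral>\<^sup>+ y. ennreal (pk \<alpha> h t y x) * indicator B y \<partial>mE) = (\<integral>\<^sup>+ y. ennreal (pk \<alpha> h t y x * f x) * indicator B y \<partial>mE)" .
    qed
    finally show ?thesis .
  qed
  have Gm: "(\<lambda>(x, y). ennreal (pk \<alpha> h t y x * f x) * indicator B y) \<in> borel_measurable (mE \<Otimes>\<^sub>M mE)"
  proof -
    have f2: "(\<lambda>p::real\<times>real. f (fst p)) \<in> borel_measurable (mE \<Otimes>\<^sub>M mE)"
      by (rule measurable_compose[OF measurable_fst]) (use fm' in \<open>simp add: measurable_cong_sets[OF sets_mE refl]\<close>)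
    have p2: "(\<lambda>p::real\<times>real. pk \<alpha> h t (snd p) (fst p)) \<in> borel_measurable (mE \<Otimes>\<^sub>M mE)"
      using pk_meas_swap_mE by (simp add: case_prod_beta)
    have i2: "(\<lambda>p::real\<times>real. indicator B (snd p) :: ennreal) \<in> borel_measurable (mE \<Otimes>\<^sub>M mE)"
      by (rule measurable_compose[OF measurable_snd]) (simp add: measurable_cong_sets[OF sets_mE refl])
    have "(\<lambda>p::real\<times>real. ennreal (pk \<alpha> h t (snd p) (fst p) * f (fst p)) * indicator B (snd p)) \<in> borel_measurable (mE \<Otimes>\<^sub>M mE)"
      by (intro borel_measurable_times_ennreal i2 measurable_compose[OF _ measurable_ennreal] borel_measurable_times p2 f2)
    then show ?thesis by (simp add: case_prod_beta)
  qed
  have 5: "(\<integral>\<^sup>+ x. \<integral>\<^sup>+ y. ennreal (pk \<alpha> h t y x * f x) * indicator B y \<partial>mE \<partial>mE)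
      = (\<integral>\<^sup>+ y. \<integral>\<^sup>+ x. ennreal (pk \<alpha> h t y x * f x) * indicator B y \<partial>mE \<partial>mE)"
    by (rule P2.Fubini'[symmetric, OF Gm])
  have 6: "(\<integral>\<^sup>+ y. \<integral>\<^sup>+ x. ennreal (pk \<alpha> h t y x * f x) * indicator B y \<partial>mE \<partial>mE)
      = (\<integral>\<^sup>+ y. (\<integral>\<^sup>+ x. ennreal (pk \<alpha> h t y x * f x) \<partial>mE) * indicator B y \<partial>mE)"
  proof (intro nn_integral_cong)
    fix y
    have "(\<lambda>x. (\<lambda>(x, y). ennreal (pk \<alpha> h t y x * f x) * indicator B y) (x, y)) \<in> borel_measurable mE"
      by (rule measurable_compose[OF measurable_Pair2' Gm]) simp
    then have "(\<lambda>x. ennreal (pk \<alpha> h t y x * f x)) \<in> borel_measurable mE"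
    proof -
      have "(\<lambda>(x, y). ennreal (pk \<alpha> h t y x * f x)) \<in> borel_measurable (mE \<Otimes>\<^sub>M mE)"
      proof -
        have f2: "(\<lambda>p::real\<times>real. f (fst p)) \<in> borel_measurable (mE \<Otimes>\<^sub>M mE)"
          by (rule measurable_compose[OF measurable_fst]) (use fm' in \<open>simp add: measurable_cong_sets[OF sets_mE refl]\<close>)
        have p2: "(\<lambda>p::real\<times>real. pk \<alpha> h t (snd p) (fst p)) \<in> borel_measurable (mE \<Otimes>\<^sub>M mE)"
          using pk_meas_swap_mE by (simp add: case_prod_beta)
        have "(\<lambda>p::real\<times>real. ennreal (pk \<alpha> h t (snd p) (fst p) * f (fst p))) \<in> borel_measurable (mE \<Otimes>\<^sub>M mE)"
          by (intro measurable_compose[OF _ measurable_ennreal] borel_measurable_times p2 f2)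
        then show ?thesis by (simp add: case_prod_beta)
      qed
      from measurable_compose[OF measurable_Pair2' this, of y] show ?thesis by simp
    qed
    then show "(\<integral>\<^sup>+ x. ennreal (pk \<alpha> h t y x * f x) * indicator B y \<partial>mE) = (\<integral>\<^sup>+ x. ennreal (pk \<alpha> h t y x * f x) \<partial>mE) * indicator B y"
      by (rule nn_integral_multc)
  qed
  show ?thesis using 1 2 3 4 5 6 by simp
qed

lemma k_meas: "(\<lambda>y. \<integral>\<^sup>+ x. ennreal (pk \<alpha> h t y x * f x) \<partial>mE) \<in> borel_measurable mE"
proof -
  interpret ME: sigma_finite_measure mE by (rule sf_mE)
  note fm' = fm[OF a hm hpos hint tpos fD]
  have f2: "(\<lambda>p::real\<times>real. f (snd p)) \<in> borel_measurable (mE \<Otimes>\<^sub>M mE)"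
    by (rule measurable_compose[OF measurable_snd]) (use fm' in \<open>simp add: measurable_cong_sets[OF sets_mE refl]\<close>)
  have p2: "(\<lambda>p::real\<times>real. pk \<alpha> h t (fst p) (snd p)) \<in> borel_measurable (mE \<Otimes>\<^sub>M mE)"
    using pk_meas_mE by (simp add: case_prod_beta)
  have "(\<lambda>p::real\<times>real. ennreal (pk \<alpha> h t (fst p) (snd p) * f (snd p))) \<in> borel_measurable (mE \<Otimes>\<^sub>M mE)"
    by (intro measurable_compose[OF _ measurable_ennreal] borel_measurable_times p2 f2)
  then have "(\<lambda>(y, x). ennreal (pk \<alpha> h t y x * f x)) \<in> borel_measurable (mE \<Otimes>\<^sub>M mE)"
    by (simp add: case_prod_beta)
  then show ?thesis by (rule ME.borel_measurable_nn_integral)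
qed

lemma preH: "AE y in mE. (\<integral>\<^sup>+ x. ennreal (pk \<alpha> h t y x * f x) \<partial>mE) \<le> ennreal (Pt \<alpha> h t f y)"
proof -
  interpret ME: sigma_finite_measure mE by (rule sf_mE)
  let ?L = "lawX \<alpha> h t f"
  let ?k = "\<lambda>y. \<integral>\<^sup>+ x. ennreal (pk \<alpha> h t y x * f x) \<partial>mE"
  have pL: "prob_space ?L"
  proof -
    have "prob_space (\<mu>' \<Otimes>\<^sub>M \<Omega>')"
      by (intro prob_space_pair prob_mu[OF a hm hpos hint tpos fD] prob_Omega[OF hm hpos hint])
    then show ?thesis unfolding lawX_eq[OF a hm hpos hint tpos fD]
      by (rule prob_space.prob_space_distr) (rule meas_F[OF a hm hpos hint tpos fD])
  qed
  have ac: "absolutely_continuous mE ?L" by (rule AC[OF a hm hpos hint tpos fD])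
  have sL: "sets ?L = sets mE" by (simp add: lawX_eq[OF a hm hpos hint tpos fD] sets_mE)
  have dens: "density mE (RN_deriv mE ?L) = ?L" by (rule ME.density_RN_deriv[OF ac sL])
  have le: "AE y in mE. ?k y \<le> RN_deriv mE ?L y"
  proof (rule AE_le_of_set_integrals[OF k_meas borel_measurable_RN_deriv])
    have "integral\<^sup>N mE (RN_deriv mE ?L) = emeasure (density mE (RN_deriv mE ?L)) (space mE)"
      by (simp add: emeasure_density)
    also have "\<dots> = 1" unfolding dens using pL by (simp add: prob_space.emeasure_space_1 sL[symmetric] cong: sets_eq_imp_space_eq)
    finally show "integral\<^sup>N mE (RN_deriv mE ?L) \<noteq> \<infinity>" by simp
  next
    fix B assume B: "B \<in> sets mE"
    then have Bb: "B \<in> sets borel" by (simp add: sets_mE)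
    have "(\<integral>\<^sup>+ y. ?k y * indicator B y \<partial>mE) \<le> emeasure ?L B" by (rule LB[OF Bb])
    also have "\<dots> = emeasure (density mE (RN_deriv mE ?L)) B" by (simp add: dens)
    also have "\<dots> = (\<integral>\<^sup>+ y. RN_deriv mE ?L y * indicator B y \<partial>mE)"
      using B by (simp add: emeasure_density)
    finally show "(\<integral>\<^sup>+ y. ?k y * indicator B y \<partial>mE) \<le> (\<integral>\<^sup>+ y. RN_deriv mE ?L y * indicator B y \<partial>mE)" .
  qed
  have fin: "AE y in mE. RN_deriv mE ?L y \<noteq> \<infinity>"
    by (rule ME.RN_deriv_finite[OF prob_space_imp_sigma_finite[OF pL] ac sL])
  from le fin show ?thesis
    by eventually_elim (simp add: Pt_def ennreal_enn2real_if)
qed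

end

end


lemma mE_space_pos: "emeasure mE (space mE) \<noteq> 0"
proof -
  have "emeasure mE UNIV = (\<integral>\<^sup>+ y. ennreal (indicator {0<..} y * y) * indicator UNIV y \<partial>lborel)"
    by (rule mE_density) simp
  also have "\<dots> \<ge> (\<integral>\<^sup>+ y. indicator {1..2::real} y \<partial>lborel)"
    by (intro nn_integral_mono) (auto simp: indicator_def)
  finally have "emeasure mE UNIV \<ge> 1" by simp
  then show ?thesis by auto
qed

lemma not_AE_False_mE: "\<not> (AE x in mE. False)"
proof
  assume "AE x in mE. False"
  then obtain N where "N \<in> null_sets mE" "space mE \<subseteq> N" unfolding eventually_ae_filter by auto
  then have "emeasure mE (space mE) = 0" by (metis emeasure_eq_0 null_setsD1 null_setsD2 sets.top)
  with mE_space_pos show False by simp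
qed

theorem lemma3p2:
  fixes \<alpha> :: real and h :: "real \<Rightarrow> real"
  assumes "0 < \<alpha>"
    and "(\<lambda>r. indicator {0<..<1} r * h r) \<in> borel_measurable borel"
    and "\<forall>r\<in>{0<..<1}. 0 \<le> h r"
    and "(\<integral>\<^sup>+ r. ennreal (indicator {0<..<1} r * h r * r) \<partial>lborel) = 1"
  shows "(\<forall>t>0. pre_Harris mE (Pt \<alpha> h t)) \<and> semigroup_partially_integral (\<lambda>s. Pt \<alpha> h s)"
proof -
  note A = assms
  have PH: "pre_Harris mE (Pt \<alpha> h t)" if t: "t > 0" for t
    unfolding pre_Harris_def
  proof (intro exI[of _ "pk \<alpha> h t"] conjI allI ballI)
    show "(\<lambda>(x, y). pk \<alpha> h t x y) \<in> borel_measurable (mE \<Otimes>\<^sub>M mE)" by (rule pk_meas_mE[OF A t])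
    fix x y show "0 \<le> pk \<alpha> h t x y" by (rule pk_nn[OF A t])
  next
    fix f assume "f \<in> Dens mE"
    show "AE x in mE. (\<integral>\<^sup>+ y. ennreal (pk \<alpha> h t x y * f y) \<partial>mE) \<le> ennreal (Pt \<alpha> h t f x)"
      by (rule preH[OF A t \<open>f \<in> Dens mE\<close>])
  next
    show "AE x in mE. 0 < (\<integral>\<^sup>+ y. ennreal (pk \<alpha> h t x y) \<partial>mE)" by (rule pos[OF A t])
  qed
  have PI: "partially_integral mE (Pt \<alpha> h 1)"
    unfolding partially_integral_def
  proof (intro exI[of _ "pk \<alpha> h 1"] conjI allI ballI)
    have t: "(0::real) < 1" by simp
    show "(\<lambda>(x, y). pk \<alpha> h 1 x y) \<in> borel_measurable (mE \<Otimes>\<^sub>M mE)" by (rule pk_meas_mE[OF A t])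
    fix x y show "0 \<le> pk \<alpha> h 1 x y" by (rule pk_nn[OF A t])
  next
    fix f assume "f \<in> Dens mE"
    show "AE x in mE. (\<integral>\<^sup>+ y. ennreal (pk \<alpha> h 1 x y * f y) \<partial>mE) \<le> ennreal (Pt \<alpha> h 1 f x)"
      by (rule preH[OF A _ \<open>f \<in> Dens mE\<close>]) simp
  next
    have t: "(0::real) < 1" by simp
    show "0 < (\<integral>\<^sup>+ x. \<integral>\<^sup>+ y. ennreal (pk \<alpha> h 1 x y) \<partial>mE \<partial>mE)"
    proof (rule ccontr)
      assume "\<not> ?thesis"
      then have "(\<integral>\<^sup>+ x. \<integral>\<^sup>+ y. ennreal (pk \<alpha> h 1 x y) \<partial>mE \<partial>mE) = 0" by simp
      then have "AE x in mE. (\<integral>\<^sup>+ y. ennreal (pk \<alpha> h 1 x y) \<partial>mE) = 0"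
        by (simp add: nn_integral_0_iff_AE[OF Z_meas[OF A t]])
      with pos[OF A t] have "AE x in mE. False" by eventually_elim simp
      with not_AE_False_mE show False by simp
    qed
  qed
  show ?thesis using PH PI unfolding semigroup_partially_integral_def by (auto intro!: exI[of _ 1])
qed


end
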